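(* Let $k$ be a field and $d\ge 0$ an integer. Let $A_{d+1}=k[a_1,\ldots,a_{d+1},b_1,\ldots,b_{d+1}]$ and $B_d=k[a_1,\ldots,a_d,b_1,\ldots,b_d,c]$, bigraded as in the context, and regard $B_d$ as a bigraded $A_{d+1}$-module via the algebra morphism $f:A_{d+1}\to B_d$ defined in the context. Then there is an exact sequence of bigraded $A_{d+1}$-modules $$0\to t^{-2}v^{2(d+1)}\frac{1-v^{2(d+1)}}{1-v^2}\cdot A_{d+1}\longrightarrow \frac{1-v^{2(d+1)}}{1-v^2}\cdot A_{d+1}\longrightarrow B_d\to 0,$$ where $\frac{1-v^{2(d+1)}}{1-v^2}=1+v^2+\cdots+v^{2d}$.
   Context: For $e\ge 0$, $A_e=k[a_1,\ldots,a_e,b_1,\ldots,b_e]$ is the bigraded polynomial algebra with $\deg(a_i)=(2(e-i+1),0)$ and $\deg(b_i)=(2(e-i+1),-2)$. $B_d=k[a_1,\ldots,a_d,b_1,\ldots,b_d,c]$ is bigraded with $\deg(a_i)=(2(d-i+1),0)$, $\deg(b_i)=(2(d-i+1),-2)$, $\deg(c)=(2,0)$. The morphism of bigraded algebras $f:A_{d+1}\to B_d$ is given by $a_i\mapsto a_{i-1}-ca_i$ and $b_i\mapsto b_{i-1}-cb_i$ for $1\le i\le d+1$, where one sets $a_0=b_0=b_{d+1}=0$ and $a_{d+1}=1$ in $B_d$. Notation: for a bigraded vector space $N=\bigoplus_{i,j}N_{ij}$ with finite-dimensional components, its class is $P=\sum_{i,j}v^it^j\dim N_{ij}$, and for a bigraded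 module $M$, $P\cdot M$ denotes the bigraded module $N\otimes_k M$ (well defined up to isomorphism); e.g. $v^it^j\cdot M$ is $M$ with bigrading shifted so that a copy of $k$ in degree $(i,j)$ is tensored on. *)

theory Defs
  imports "HOL-Library.Poly_Mapping"
begin

datatype var = VA nat | VB nat | VC

type_synonym 'k mpoly = "(var \<Rightarrow>\<^sub>0 nat) \<Rightarrow>\<^sub>0 'k"

definition X :: "var \<Rightarrow> 'k::comm_ring_1 mpoly" where
  "X v = Poly_Mapping.single (Poly_Mapping.single v 1) 1"

definition vars_of :: "'k::zero mpoly \<Rightarrow> var set" where
  "vars_of p = (\<Union>m\<in>Poly_Mapping.keys p. Poly_Mapping.keys m)"

definition polyA :: "nat \<Rightarrow> 'k::comm_ring_1 mpoly set" where
  "polyA e = {p. vars_of p \<subseteq> {VA i |i. 1 \<le> i \<and> i \<le> e} \<union> {VB i |i. 1 \<le> i \<and> i \<le> e}}"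

definition polyB :: "nat \<Rightarrow> 'k::comm_ring_1 mpoly set" where
  "polyB d = {p. vars_of p \<subseteq> {VA i |i. 1 \<le> i \<and> i \<le> d} \<union> {VB i |i. 1 \<le> i \<and> i \<le> d} \<union> {VC}}"

fun wA :: "nat \<Rightarrow> var \<Rightarrow> int \<times> int" where
  "wA e (VA i) = (2 * (int e - int i + 1), 0)"
| "wA e (VB i) = (2 * (int e - int i + 1), -2)"
| "wA e VC = (0, 0)"

fun wB :: "nat \<Rightarrow> var \<Rightarrow> int \<times> int" where
  "wB d (VA i) = (2 * (int d - int i + 1), 0)"
| "wB d (VB i) = (2 * (int d - int i + 1), -2)"
| "wB d VC = (2, 0)"

definition mdeg :: "(var \<Rightarrow> int \<times> int) \<Rightarrow> (var \<Rightarrow>\<^sub>0 nat) \<Rightarrow> int \<times> int" where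
  "mdeg w m = ((\<Sum>v\<in>Poly_Mapping.keys m. int (Poly_Mapping.lookup m v) * fst (w v)),
               (\<Sum>v\<in>Poly_Mapping.keys m. int (Poly_Mapping.lookup m v) * snd (w v)))"

text \<open>p is bihomogeneous of bidegree ij (0 is homogeneous of every degree).\<close>
definition homog :: "(var \<Rightarrow> int \<times> int) \<Rightarrow> int \<times> int \<Rightarrow> 'k::zero mpoly \<Rightarrow> bool" where
  "homog w ij p \<longleftrightarrow> (\<forall>m\<in>Poly_Mapping.keys p. mdeg w m = ij)"

definition subst :: "(var \<Rightarrow> 'k::comm_ring_1 mpoly) \<Rightarrow> 'k mpoly \<Rightarrow> 'k mpoly" where
  "subst \<sigma> p = (\<Sum>m\<in>Poly_Mapping.keys p. Poly_Mapping.single 0 (Poly_Mapping.lookup p m) * (\<Prod>v\<in>Poly_Mapping.keys m. \<sigma> v ^ Poly_Mapping.lookup m v))"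

definition aB :: "nat \<Rightarrow> nat \<Rightarrow> 'k::comm_ring_1 mpoly" where
  "aB d j = (if j = 0 then 0 else if j = d + 1 then 1 else X (VA j))"
definition bB :: "nat \<Rightarrow> nat \<Rightarrow> 'k::comm_ring_1 mpoly" where
  "bB d j = (if j = 0 \<or> j = d + 1 then 0 else X (VB j))"

fun fimg :: "nat \<Rightarrow> var \<Rightarrow> 'k::comm_ring_1 mpoly" where
  "fimg d (VA i) = aB d (i - 1) - X VC * aB d i"
| "fimg d (VB i) = bB d (i - 1) - X VC * bB d i"
| "fimg d VC = 0"

definition fmap :: "nat \<Rightarrow> 'k::comm_ring_1 mpoly \<Rightarrow> 'k mpoly" where
  "fmap d = subst (fimg d)"

text \<open>The free A_{d+1}-module of rank d+1 (basis indexed by 0..d), elements as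
  coordinate functions vanishing beyond d.\<close>
definition freeMod :: "nat \<Rightarrow> (nat \<Rightarrow> 'k::comm_ring_1 mpoly) set" where
  "freeMod d = {x. (\<forall>l. x l \<in> polyA (d + 1)) \<and> (\<forall>l>d. x l = 0)}"

definition madd :: "(nat \<Rightarrow> 'k::comm_ring_1 mpoly) \<Rightarrow> (nat \<Rightarrow> 'k mpoly) \<Rightarrow> (nat \<Rightarrow> 'k mpoly)" where
  "madd x y = (\<lambda>l. x l + y l)"

definition smul :: "'k::comm_ring_1 mpoly \<Rightarrow> (nat \<Rightarrow> 'k mpoly) \<Rightarrow> (nat \<Rightarrow> 'k mpoly)" where
  "smul a x = (\<lambda>l. a * x l)"

text \<open>Grading of P\<cdot>A_{d+1} where basis vector l sits in bidegree s l:
  x is homogeneous of bidegree ij iff each coordinate x l has bidegree ij - s l.\<close>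
definition homogM :: "nat \<Rightarrow> (nat \<Rightarrow> int \<times> int) \<Rightarrow> int \<times> int \<Rightarrow> (nat \<Rightarrow> 'k::zero mpoly) \<Rightarrow> bool" where
  "homogM d s ij x \<longleftrightarrow> (\<forall>l\<le>d. homog (wA (d + 1)) (fst ij - fst (s l), snd ij - snd (s l)) (x l))"

text \<open>Shifts: (1 + v^2 + ... + v^{2d}) and t^{-2} v^{2(d+1)} (1 + ... + v^{2d}).\<close>
definition shiftMid :: "nat \<Rightarrow> int \<times> int" where
  "shiftMid l = (2 * int l, 0)"
definition shiftSub :: "nat \<Rightarrow> nat \<Rightarrow> int \<times> int" where
  "shiftSub d l = (2 * (int d + 1) + 2 * int l, -2)"

end

theory Submission
  imports Defs "HOL-Computational_Algebra.Polynomial"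
begin

abbreviation CC :: "'k::comm_ring_1 \<Rightarrow> 'k mpoly" where "CC a \<equiv> Poly_Mapping.single 0 a"

definition monoE :: "(var \<Rightarrow> 'b::comm_ring_1) \<Rightarrow> (var \<Rightarrow>\<^sub>0 nat) \<Rightarrow> 'b" where
  "monoE \<sigma> m = (\<Prod>v\<in>Poly_Mapping.keys m. \<sigma> v ^ Poly_Mapping.lookup m v)"

definition evalR :: "(var \<Rightarrow> 'b::comm_ring_1) \<Rightarrow> ('k::comm_ring_1 \<Rightarrow> 'b) \<Rightarrow> 'k mpoly \<Rightarrow> 'b" where
  "evalR \<sigma> \<kappa> p = (\<Sum>m\<in>Poly_Mapping.keys p. \<kappa> (Poly_Mapping.lookup p m) * monoE \<sigma> m)"

definition hom :: "('k::comm_ring_1 mpoly \<Rightarrow> 'b::comm_ring_1) \<Rightarrow> bool" where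
  "hom H \<longleftrightarrow> (\<forall>p q. H (p + q) = H p + H q) \<and> (\<forall>p q. H (p * q) = H p * H q) \<and> H 1 = 1"

definition khom :: "('k::comm_ring_1 \<Rightarrow> 'b::comm_ring_1) \<Rightarrow> bool" where
  "khom \<kappa> \<longleftrightarrow> (\<forall>a b. \<kappa> (a + b) = \<kappa> a + \<kappa> b) \<and> (\<forall>a b. \<kappa> (a * b) = \<kappa> a * \<kappa> b) \<and> \<kappa> 1 = 1"

lemma khom_0: "khom \<kappa> \<Longrightarrow> \<kappa> 0 = 0"
  unfolding khom_def by (metis add_cancel_right_right add_0)

lemma pm_expand: "(f :: 'a \<Rightarrow>\<^sub>0 'b::comm_monoid_add) = (\<Sum>k\<in>Poly_Mapping.keys f. Poly_Mapping.single k (Poly_Mapping.lookup f k))"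
proof (rule poly_mapping_eqI)
  fix x
  show "Poly_Mapping.lookup f x = Poly_Mapping.lookup (\<Sum>k\<in>Poly_Mapping.keys f. Poly_Mapping.single k (Poly_Mapping.lookup f k)) x"
    unfolding lookup_sum lookup_single
    by (cases "x \<in> Poly_Mapping.keys f") (auto simp: when_def in_keys_iff)
qed

lemma pm_induct:
  assumes "P 0" "\<And>m a. P (Poly_Mapping.single m a)" "\<And>p q. P p \<Longrightarrow> P q \<Longrightarrow> P (p + q)"
  shows "P (f :: 'a \<Rightarrow>\<^sub>0 'b::comm_monoid_add)"
proof -
  have "\<And>S. finite S \<Longrightarrow> P (\<Sum>k\<in>S. Poly_Mapping.single k (Poly_Mapping.lookup f k))"
  proof -
    fix S :: "'a set" assume "finite S"
    then show "P (\<Sum>k\<in>S. Poly_Mapping.single k (Poly_Mapping.lookup f k))"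
      by (induction S rule: finite_induct) (auto intro: assms)
  qed
  then show ?thesis by (metis pm_expand finite_keys)
qed

lemma mono_superset:
  assumes "finite V" "Poly_Mapping.keys m \<subseteq> V"
  shows "monoE \<sigma> m = (\<Prod>v\<in>V. \<sigma> v ^ Poly_Mapping.lookup m v)"
  unfolding monoE_def
  by (rule prod.mono_neutral_left) (use assms in \<open>auto simp: in_keys_iff\<close>)

lemma mono_add: "monoE \<sigma> (m + n) = monoE \<sigma> m * monoE \<sigma> n"
proof -
  let ?V = "Poly_Mapping.keys m \<union> Poly_Mapping.keys n"
  have "monoE \<sigma> (m + n) = (\<Prod>v\<in>?V. \<sigma> v ^ Poly_Mapping.lookup (m+n) v)"
    by (rule mono_superset) (auto dest: keys_add[THEN subsetD])
  also have "\<dots> = (\<Prod>v\<in>?V. \<sigma> v ^ Poly_Mapping.lookup m v) * (\<Prod>v\<in>?V. \<sigma> v ^ Poly_Mapping.lookup n v)"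
    by (simp add: lookup_add power_add prod.distrib)
  also have "\<dots> = monoE \<sigma> m * monoE \<sigma> n"
    by (subst (1 2) mono_superset[where V = ?V]) auto
  finally show ?thesis .
qed

lemma mono_zero [simp]: "monoE \<sigma> 0 = 1"
  by (simp add: monoE_def)

lemma evalR_superset:
  assumes "khom \<kappa>" "finite K" "Poly_Mapping.keys p \<subseteq> K"
  shows "evalR \<sigma> \<kappa> p = (\<Sum>m\<in>K. \<kappa> (Poly_Mapping.lookup p m) * monoE \<sigma> m)"
  unfolding evalR_def
  by (rule sum.mono_neutral_left) (use assms in \<open>auto simp: in_keys_iff khom_0\<close>)

lemma evalR_add:
  assumes "khom \<kappa>"
  shows "evalR \<sigma> \<kappa> (p + q) = evalR \<sigma> \<kappa> p + evalR \<sigma> \<kappa> q"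
proof -
  let ?K = "Poly_Mapping.keys p \<union> Poly_Mapping.keys q"
  have "evalR \<sigma> \<kappa> (p + q) = (\<Sum>m\<in>?K. \<kappa> (Poly_Mapping.lookup (p+q) m) * monoE \<sigma> m)"
    by (rule evalR_superset) (use assms in \<open>auto dest: keys_add[THEN subsetD]\<close>)
  also have "\<dots> = (\<Sum>m\<in>?K. \<kappa> (Poly_Mapping.lookup p m) * monoE \<sigma> m) + (\<Sum>m\<in>?K. \<kappa> (Poly_Mapping.lookup q m) * monoE \<sigma> m)"
    using assms by (simp add: lookup_add khom_def distrib_right sum.distrib)
  also have "\<dots> = evalR \<sigma> \<kappa> p + evalR \<sigma> \<kappa> q"
    by (subst (1 2) evalR_superset[where K = ?K]) (use assms in auto)
  finally show ?thesis .
qed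

lemma evalR_zero [simp]: "evalR \<sigma> \<kappa> 0 = 0"
  by (simp add: evalR_def)

lemma evalR_single:
  assumes "khom \<kappa>"
  shows "evalR \<sigma> \<kappa> (Poly_Mapping.single m a) = \<kappa> a * monoE \<sigma> m"
  using assms by (simp add: evalR_def khom_0)

lemma evalR_mult_single:
  assumes "khom \<kappa>"
  shows "evalR \<sigma> \<kappa> (Poly_Mapping.single m a * q) = \<kappa> a * monoE \<sigma> m * evalR \<sigma> \<kappa> q"
proof (induction q rule: pm_induct)
  case 1 then show ?case by simp
next
  case (2 n b)
  then show ?case using assms
    by (simp add: mult_single evalR_single mono_add khom_def)
next
  case (3 p q)
  then show ?case using assms by (simp add: distrib_left evalR_add)
qed

lemma evalR_mult:
  assumes "khom \<kappa>"
  shows "evalR \<sigma> \<kappa> (p * q) = evalR \<sigma> \<kappa> p * evalR \<sigma> \<kappa> q"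
proof (induction p rule: pm_induct)
  case 1 then show ?case by simp
next
  case (2 n b)
  then show ?case using assms by (simp add: evalR_mult_single evalR_single)
next
  case (3 p1 p2)
  then show ?case using assms by (simp add: distrib_right evalR_add)
qed

lemma evalR_one:
  assumes "khom \<kappa>"
  shows "evalR \<sigma> \<kappa> 1 = 1"
  using assms by (simp add: evalR_def khom_def)

lemma evalR_hom: "khom \<kappa> \<Longrightarrow> hom (evalR \<sigma> \<kappa>)"
  by (simp add: hom_def evalR_add evalR_mult evalR_one)

lemma evalR_C: "khom \<kappa> \<Longrightarrow> evalR \<sigma> \<kappa> (CC a) = \<kappa> a"
  by (simp add: evalR_single)

lemma evalR_X: "khom \<kappa> \<Longrightarrow> evalR \<sigma> \<kappa> (X v) = \<sigma> v"
  by (simp add: X_def evalR_single khom_def monoE_def)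

lemma khom_C: "khom (CC :: 'k::comm_ring_1 \<Rightarrow> 'k mpoly)"
  by (simp add: khom_def single_add mult_single)

lemma subst_evalR: "subst \<sigma> = evalR \<sigma> CC"
  by (simp add: fun_eq_iff subst_def evalR_def monoE_def)

lemma hom_subst: "hom (subst \<sigma>)"
  by (simp add: subst_evalR evalR_hom khom_C)

lemma subst_C [simp]: "subst \<sigma> (CC a) = CC a"
  by (simp add: subst_evalR evalR_C khom_C)

lemma subst_X [simp]: "subst \<sigma> (X v) = \<sigma> v"
  by (simp add: subst_evalR evalR_X khom_C)


lemma hom_add: "hom H \<Longrightarrow> H (p + q) = H p + H q" by (simp add: hom_def)
lemma hom_mult: "hom H \<Longrightarrow> H (p * q) = H p * H q" by (simp add: hom_def)
lemma hom_one: "hom H \<Longrightarrow> H 1 = 1" by (simp add: hom_def)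
lemma hom_zero: "hom H \<Longrightarrow> H 0 = 0"
proof -
  assume h: "hom H"
  have "H 0 + H 0 = H 0 + 0" using hom_add[OF h, of 0 0] by simp
  then show ?thesis by (rule add_left_imp_eq)
qed
lemma hom_uminus: "hom H \<Longrightarrow> H (- p) = - H p"
proof -
  assume h: "hom H"
  have "H (- p) + H p = 0" using hom_add[OF h, of "-p" p] hom_zero[OF h] by simp
  then show ?thesis by (simp add: eq_neg_iff_add_eq_0)
qed
lemma hom_diff: "hom H \<Longrightarrow> H (p - q) = H p - H q"
  by (metis diff_conv_add_uminus hom_add hom_uminus)
lemma hom_sum: assumes h: "hom H" shows "H (\<Sum>i\<in>S. f i) = (\<Sum>i\<in>S. H (f i))"
  by (induction S rule: infinite_finite_induct) (auto simp: hom_zero[OF h] hom_add[OF h])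
lemma hom_power: assumes h: "hom H" shows "H (p ^ n) = H p ^ n"
  by (induction n) (auto simp: hom_one[OF h] hom_mult[OF h])
lemma hom_comp: "hom H \<Longrightarrow> hom H' \<Longrightarrow> hom (H' \<circ> H)"
  unfolding hom_def by simp
lemma hom_id: "hom id" by (simp add: hom_def)

lemma X_power: "(X v :: 'k::comm_ring_1 mpoly) ^ n = Poly_Mapping.single (Poly_Mapping.single v n) 1"
  by (induction n) (auto simp: X_def mult_single single_add[symmetric] add.commute)

lemma monoE_X: "monoE X m = (Poly_Mapping.single m 1 :: 'k::comm_ring_1 mpoly)"
proof -
  have "\<And>S. finite S \<Longrightarrow> (\<Prod>v\<in>S. (X v :: 'k mpoly) ^ Poly_Mapping.lookup m v)
        = Poly_Mapping.single (\<Sum>v\<in>S. Poly_Mapping.single v (Poly_Mapping.lookup m v)) 1"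
  proof -
    fix S :: "var set" assume "finite S"
    then show "(\<Prod>v\<in>S. (X v :: 'k mpoly) ^ Poly_Mapping.lookup m v)
        = Poly_Mapping.single (\<Sum>v\<in>S. Poly_Mapping.single v (Poly_Mapping.lookup m v)) 1"
      by (induction S rule: finite_induct) (auto simp: X_power mult_single)
  qed
  then show ?thesis unfolding monoE_def by (metis pm_expand finite_keys)
qed

lemma single_as_mono: "Poly_Mapping.single m a = CC a * (monoE X m :: 'k::comm_ring_1 mpoly)"
  by (simp add: monoE_X mult_single)

lemma mpoly_induct:
  fixes p :: "'k::comm_ring_1 mpoly"
  assumes "vars_of p \<subseteq> V"
    and C: "\<And>a. P (CC a)"
    and A: "\<And>p q. P p \<Longrightarrow> P q \<Longrightarrow> P (p + q)"
    and M: "\<And>p v. P p \<Longrightarrow> v \<in> V \<Longrightarrow> P (X v * p)"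
  shows "P p"
proof -
  have mon: "P (CC a * (\<Prod>v\<in>S. (X v :: 'k mpoly) ^ e v))" if "finite S" "S \<subseteq> V" for S e a
    using that
  proof (induction S rule: finite_induct)
    case empty then show ?case using C by simp
  next
    case (insert x F)
    have xV: "x \<in> V" using insert.prems by simp
    have IH: "P (CC a * (\<Prod>v\<in>F. (X v :: 'k mpoly) ^ e v))" using insert.IH insert.prems by simp
    have pw: "P ((X x) ^ n * q)" if "P q" for n q using that
    proof (induction n)
      case 0 then show ?case by simp
    next
      case (Suc n)
      have "P (X x * (X x ^ n * q))" by (rule M[OF Suc.IH[OF Suc.prems] xV])
      then show ?case by (simp add: mult.assoc)
    qed
    have "CC a * (\<Prod>v\<in>insert x F. (X v :: 'k mpoly) ^ e v) = X x ^ e x * (CC a * (\<Prod>v\<in>F. X v ^ e v))"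
      using insert.hyps by (simp add: mult_ac)
    then show ?case using pw[OF IH] by simp
  qed
  have sing: "P (Poly_Mapping.single m a)" if "m \<in> Poly_Mapping.keys p" for m a
  proof -
    have "Poly_Mapping.keys m \<subseteq> V" using that assms(1) unfolding vars_of_def by auto
    then have "P (CC a * (\<Prod>v\<in>Poly_Mapping.keys m. (X v :: 'k mpoly) ^ Poly_Mapping.lookup m v))"
      by (intro mon) auto
    then show ?thesis by (simp add: single_as_mono[of m a] monoE_def)
  qed
  have P0: "P 0" using C[of 0] by simp
  have "\<And>S. S \<subseteq> Poly_Mapping.keys p \<Longrightarrow> P (\<Sum>k\<in>S. Poly_Mapping.single k (Poly_Mapping.lookup p k))"
  proof -
    fix S assume S: "S \<subseteq> Poly_Mapping.keys p"
    have "finite S" using finite_subset[OF S finite_keys] .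
    then show "P (\<Sum>k\<in>S. Poly_Mapping.single k (Poly_Mapping.lookup p k))" using S
    proof (induction S rule: finite_induct)
      case empty then show ?case using P0 by simp
    next
      case (insert x F)
      then show ?case by (simp add: A sing)
    qed
  qed
  then have "P (\<Sum>k\<in>Poly_Mapping.keys p. Poly_Mapping.single k (Poly_Mapping.lookup p k))" by simp
  then show ?thesis by (simp flip: pm_expand)
qed

lemma hom_unique:
  fixes p :: "'k::comm_ring_1 mpoly"
  assumes h1: "hom H" and h2: "hom H'" and c: "\<And>a. H (CC a) = H' (CC a)" and x: "\<And>v. v \<in> V \<Longrightarrow> H (X v) = H' (X v)"
    and p: "vars_of p \<subseteq> V"
  shows "H p = H' p"
  apply (rule mpoly_induct[where P = "\<lambda>p. H p = H' p", OF p])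
    apply (rule c)
   apply (simp add: hom_add[OF h1] hom_add[OF h2])
  apply (simp add: hom_mult[OF h1] hom_mult[OF h2] x)
  done

lemma subst_cong:
  assumes "\<And>v. v \<in> vars_of p \<Longrightarrow> \<sigma> v = \<tau> v"
  shows "subst \<sigma> p = subst \<tau> p"
  by (rule hom_unique[OF hom_subst hom_subst, where V = "vars_of p"]) (use assms in auto)

lemma subst_id:
  assumes "\<And>v. v \<in> vars_of p \<Longrightarrow> \<sigma> v = X v"
  shows "subst \<sigma> p = p"
  using hom_unique[OF hom_subst hom_id, where V = "vars_of p" and p = p] assms by auto

lemma vars_of_add: "vars_of ((p::'k::comm_ring_1 mpoly) + q) \<subseteq> vars_of p \<union> vars_of q"
  unfolding vars_of_def using keys_add[of p q] by blast

lemma vars_of_mult: "vars_of ((p::'k::comm_ring_1 mpoly) * q) \<subseteq> vars_of p \<union> vars_of q"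
proof
  fix v assume "v \<in> vars_of (p * q)"
  then obtain m where m: "m \<in> Poly_Mapping.keys (p * q)" "v \<in> Poly_Mapping.keys m"
    unfolding vars_of_def by auto
  then obtain a b where ab: "m = a + b" "a \<in> Poly_Mapping.keys p" "b \<in> Poly_Mapping.keys q"
    using keys_mult[of p q] by blast
  have "v \<in> Poly_Mapping.keys a \<union> Poly_Mapping.keys b"
    using m(2) keys_add[of a b] ab(1) by blast
  then show "v \<in> vars_of p \<union> vars_of q"
    using ab unfolding vars_of_def by blast
qed

lemma vars_of_C [simp]: "vars_of (CC a) = {}"
  by (simp add: vars_of_def)
lemma vars_of_zero [simp]: "vars_of 0 = {}"
  by (simp add: vars_of_def)
lemma vars_of_one [simp]: "vars_of (1 :: 'k::comm_ring_1 mpoly) = {}"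
  by (simp add: vars_of_def)
lemma vars_of_X: "vars_of (X v :: 'k::comm_ring_1 mpoly) \<subseteq> {v}"
  by (simp add: vars_of_def X_def)
lemma vars_of_uminus [simp]: "vars_of (- (p::'k::comm_ring_1 mpoly)) = vars_of p"
  by (simp add: vars_of_def)
lemma vars_of_diff: "vars_of ((p::'k::comm_ring_1 mpoly) - q) \<subseteq> vars_of p \<union> vars_of q"
  using vars_of_add[of p "-q"] by simp

lemma vars_sub_add: "vars_of (p::'k::comm_ring_1 mpoly) \<subseteq> V \<Longrightarrow> vars_of q \<subseteq> V \<Longrightarrow> vars_of (p + q) \<subseteq> V"
  using vars_of_add[of p q] by blast
lemma vars_sub_mult: "vars_of (p::'k::comm_ring_1 mpoly) \<subseteq> V \<Longrightarrow> vars_of q \<subseteq> V \<Longrightarrow> vars_of (p * q) \<subseteq> V"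
  using vars_of_mult[of p q] by blast
lemma vars_sub_diff: "vars_of (p::'k::comm_ring_1 mpoly) \<subseteq> V \<Longrightarrow> vars_of q \<subseteq> V \<Longrightarrow> vars_of (p - q) \<subseteq> V"
  using vars_of_diff[of p q] by blast
lemma vars_sub_X: "v \<in> V \<Longrightarrow> vars_of (X v :: 'k::comm_ring_1 mpoly) \<subseteq> V"
  using vars_of_X[of v] by blast
lemma vars_sub_power: "vars_of (p::'k::comm_ring_1 mpoly) \<subseteq> V \<Longrightarrow> vars_of (p ^ n) \<subseteq> V"
proof (induction n)
  case 0 then show ?case by simp
next
  case (Suc n) then show ?case using vars_sub_mult[of p V "p ^ n"] by simp
qed
lemma vars_sub_sum: "(\<And>i. i \<in> S \<Longrightarrow> vars_of (f i :: 'k::comm_ring_1 mpoly) \<subseteq> V) \<Longrightarrow> vars_of (\<Sum>i\<in>S. f i) \<subseteq> V"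
proof (induction S rule: infinite_finite_induct)
  case (insert x F) then show ?case using vars_sub_add[of "f x" V "sum f F"] by simp
qed simp_all

lemma vars_subst:
  assumes p: "vars_of p \<subseteq> V" and s: "\<And>v. v \<in> V \<Longrightarrow> vars_of (\<sigma> v) \<subseteq> W"
  shows "vars_of (subst \<sigma> p) \<subseteq> W"
  apply (rule mpoly_induct[where P = "\<lambda>p. vars_of (subst \<sigma> p) \<subseteq> W", OF p])
    apply simp
   apply (simp add: hom_add[OF hom_subst] vars_sub_add)
  apply (simp add: hom_mult[OF hom_subst] vars_sub_mult s)
  done


lemma mdeg_superset:
  assumes "finite V" "Poly_Mapping.keys m \<subseteq> V"
  shows "mdeg w m = ((\<Sum>v\<in>V. int (Poly_Mapping.lookup m v) * fst (w v)),
                     (\<Sum>v\<in>V. int (Poly_Mapping.lookup m v) * snd (w v)))"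
proof -
  have "(\<Sum>v\<in>Poly_Mapping.keys m. int (Poly_Mapping.lookup m v) * fst (w v)) = (\<Sum>v\<in>V. int (Poly_Mapping.lookup m v) * fst (w v))"
    by (rule sum.mono_neutral_left) (use assms in \<open>auto simp: in_keys_iff\<close>)
  moreover have "(\<Sum>v\<in>Poly_Mapping.keys m. int (Poly_Mapping.lookup m v) * snd (w v)) = (\<Sum>v\<in>V. int (Poly_Mapping.lookup m v) * snd (w v))"
    by (rule sum.mono_neutral_left) (use assms in \<open>auto simp: in_keys_iff\<close>)
  ultimately show ?thesis by (simp add: mdeg_def)
qed

lemma mdeg_add: "mdeg w (m + n) = (fst (mdeg w m) + fst (mdeg w n), snd (mdeg w m) + snd (mdeg w n))"
proof -
  let ?V = "Poly_Mapping.keys m \<union> Poly_Mapping.keys n"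
  have f: "finite ?V" by simp
  have k: "Poly_Mapping.keys (m + n) \<subseteq> ?V" using keys_add[of m n] .
  have m: "mdeg w m = ((\<Sum>v\<in>?V. int (Poly_Mapping.lookup m v) * fst (w v)),
                     (\<Sum>v\<in>?V. int (Poly_Mapping.lookup m v) * snd (w v)))"
    by (rule mdeg_superset) auto
  have n: "mdeg w n = ((\<Sum>v\<in>?V. int (Poly_Mapping.lookup n v) * fst (w v)),
                     (\<Sum>v\<in>?V. int (Poly_Mapping.lookup n v) * snd (w v)))"
    by (rule mdeg_superset) auto
  show ?thesis
    unfolding mdeg_superset[OF f k] m n
    by (simp add: lookup_add distrib_right sum.distrib)
qed

lemma mdeg_zero [simp]: "mdeg w 0 = (0, 0)"
  by (simp add: mdeg_def)

lemma mdeg_single: "mdeg w (Poly_Mapping.single v 1) = w v"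
  by (simp add: mdeg_def)

lemma homog_zero [simp]: "homog w ij 0"
  by (simp add: homog_def)

lemma homog_add: "homog w ij p \<Longrightarrow> homog w ij q \<Longrightarrow> homog w ij (p + q)"
  unfolding homog_def using keys_add[of p q] by blast

lemma homog_uminus: "homog w ij (p::'k::comm_ring_1 mpoly) \<Longrightarrow> homog w ij (- p)"
  unfolding homog_def by simp

lemma homog_diff: "homog w ij (p::'k::comm_ring_1 mpoly) \<Longrightarrow> homog w ij q \<Longrightarrow> homog w ij (p - q)"
  using homog_add[of w ij p "-q"] homog_uminus[of w ij q] by simp

lemma homog_sum: "(\<And>i. i \<in> S \<Longrightarrow> homog w ij (f i)) \<Longrightarrow> homog w ij (\<Sum>i\<in>S. f i)"
proof (induction S rule: infinite_finite_induct)
  case (insert x F) then show ?case using homog_add[of w ij "f x" "sum f F"] by simp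
qed simp_all

lemma homog_mult:
  assumes "homog w (a, b) (p::'k::comm_ring_1 mpoly)" "homog w (c, e) q"
  shows "homog w (a + c, b + e) (p * q)"
  unfolding homog_def
proof
  fix m assume "m \<in> Poly_Mapping.keys (p * q)"
  then obtain x y where xy: "m = x + y" "x \<in> Poly_Mapping.keys p" "y \<in> Poly_Mapping.keys q"
    using keys_mult[of p q] by blast
  have "mdeg w x = (a, b)" "mdeg w y = (c, e)" using assms xy unfolding homog_def by auto
  then show "mdeg w m = (a + c, b + e)" using xy(1) by (simp add: mdeg_add)
qed

lemma homog_C: "homog w (0, 0) (CC a)"
  by (simp add: homog_def)

lemma homog_one: "homog w (0, 0) (1::'k::comm_ring_1 mpoly)"
  by (simp add: homog_def)

lemma homog_X: "w v = ij \<Longrightarrow> homog w ij (X v :: 'k::comm_ring_1 mpoly)"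
  by (auto simp: homog_def X_def mdeg_def)

lemma homog_power:
  assumes "homog w (a, b) (p::'k::comm_ring_1 mpoly)"
  shows "homog w (int n * a, int n * b) (p ^ n)"
proof (induction n)
  case 0 then show ?case using homog_one by simp
next
  case (Suc n)
  have "homog w (a + int n * a, b + int n * b) (p * p ^ n)" by (rule homog_mult[OF assms Suc])
  then show ?case by (simp add: algebra_simps)
qed

lemma homog_prod:
  assumes "finite S" "\<And>i. i \<in> S \<Longrightarrow> homog w (f1 i, f2 i) (F i :: 'k::comm_ring_1 mpoly)"
  shows "homog w (\<Sum>i\<in>S. f1 i, \<Sum>i\<in>S. f2 i) (\<Prod>i\<in>S. F i)"
  using assms
proof (induction S rule: finite_induct)
  case empty then show ?case using homog_one by simp
next
  case (insert x S)
  have "homog w (f1 x + (\<Sum>i\<in>S. f1 i), f2 x + (\<Sum>i\<in>S. f2 i)) (F x * (\<Prod>i\<in>S. F i))"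
    by (rule homog_mult) (use insert in auto)
  then show ?case using insert.hyps by simp
qed

lemma homog_cong: "homog w ij p \<Longrightarrow> ij = kl \<Longrightarrow> homog w kl p" by simp

lemma homog_subst:
  fixes p :: "'k::comm_ring_1 mpoly"
  assumes p: "homog w ij p" and s: "\<And>v. v \<in> vars_of p \<Longrightarrow> homog w' (w v) (\<sigma> v)"
  shows "homog w' ij (subst \<sigma> p)"
  unfolding subst_def
proof (rule homog_sum)
  fix m assume m: "m \<in> Poly_Mapping.keys p"
  have vm: "\<And>v. v \<in> Poly_Mapping.keys m \<Longrightarrow> v \<in> vars_of p" using m unfolding vars_of_def by auto
  have "homog w' (\<Sum>v\<in>Poly_Mapping.keys m. int (Poly_Mapping.lookup m v) * fst (w v),
                  \<Sum>v\<in>Poly_Mapping.keys m. int (Poly_Mapping.lookup m v) * snd (w v))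
          (\<Prod>v\<in>Poly_Mapping.keys m. \<sigma> v ^ Poly_Mapping.lookup m v)"
  proof (rule homog_prod)
    fix v assume "v \<in> Poly_Mapping.keys m"
    then have "homog w' (fst (w v), snd (w v)) (\<sigma> v)" using s vm by simp
    then show "homog w' (int (Poly_Mapping.lookup m v) * fst (w v), int (Poly_Mapping.lookup m v) * snd (w v)) (\<sigma> v ^ Poly_Mapping.lookup m v)"
      by (rule homog_power)
  qed simp
  then have "homog w' (fst (mdeg w m), snd (mdeg w m)) (\<Prod>v\<in>Poly_Mapping.keys m. \<sigma> v ^ Poly_Mapping.lookup m v)"
    by (simp add: mdeg_def)
  moreover have "mdeg w m = ij" using p m unfolding homog_def by auto
  ultimately have "homog w' (0 + fst ij, 0 + snd ij) (CC (Poly_Mapping.lookup p m) * (\<Prod>v\<in>Poly_Mapping.keys m. \<sigma> v ^ Poly_Mapping.lookup m v))"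
    by (intro homog_mult homog_C) simp
  then show "homog w' ij (CC (Poly_Mapping.lookup p m) * (\<Prod>v\<in>Poly_Mapping.keys m. \<sigma> v ^ Poly_Mapping.lookup m v))"
    by simp
qed


definition Tw :: "var \<Rightarrow> 'k::comm_ring_1 mpoly \<Rightarrow> 'k mpoly poly" where
  "Tw w = evalR (\<lambda>v. if v = w then [:0, 1:] else [:X v:]) (\<lambda>a. [:CC a:])"

lemma khom_pC: "khom (\<lambda>a::'k::comm_ring_1. [:CC a:])"
  by (simp add: khom_def single_add mult_single mult.commute)

lemma hom_Tw: "hom (Tw w)"
  unfolding Tw_def by (rule evalR_hom[OF khom_pC])

lemma Tw_C [simp]: "Tw w (CC a) = [:CC a:]"
  unfolding Tw_def by (simp add: evalR_C[OF khom_pC])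

lemma Tw_X: "Tw w (X v) = (if v = w then [:0, 1:] else [:X v:])"
  unfolding Tw_def by (simp add: evalR_X[OF khom_pC])

lemma hom_pconst: "hom (\<lambda>p::'k::comm_ring_1 mpoly. [:p:])"
  by (simp add: hom_def)

lemma hom_Tw_eval: "hom (\<lambda>p. poly (Tw w p) x)"
  by (simp add: hom_def hom_add[OF hom_Tw] hom_mult[OF hom_Tw] hom_one[OF hom_Tw])

lemma Tw_inv: "poly (Tw w p) (X w) = (p :: 'k::comm_ring_1 mpoly)"
proof -
  have "(\<lambda>p. poly (Tw w p) (X w)) p = id p"
    by (rule hom_unique[OF hom_Tw_eval hom_id, where V = UNIV]) (auto simp: Tw_X)
  then show ?thesis by simp
qed

lemma Tw_const: "w \<notin> vars_of p \<Longrightarrow> Tw w p = [:p :: 'k::comm_ring_1 mpoly:]"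
  by (rule hom_unique[OF hom_Tw hom_pconst, where V = "vars_of p"]) (auto simp: Tw_X)


abbreviation cX :: "'k::comm_ring_1 mpoly" where "cX \<equiv> X VC"

definition Ea :: "nat \<Rightarrow> nat \<Rightarrow> 'k::comm_ring_1 mpoly" where
  "Ea d j = (\<Sum>l\<in>{j..d}. X (VA (Suc l)) * cX ^ (l - j)) + cX ^ (Suc d - j)"
definition Eb :: "nat \<Rightarrow> nat \<Rightarrow> 'k::comm_ring_1 mpoly" where
  "Eb d j = (\<Sum>l\<in>{j..d}. X (VB (Suc l)) * cX ^ (l - j))"

lemma shift_sum:
  assumes "j \<le> d"
  shows "cX * (\<Sum>l\<in>{Suc j..d}. (f l :: 'k::comm_ring_1 mpoly) * cX ^ (l - Suc j)) = (\<Sum>l\<in>{Suc j..d}. f l * cX ^ (l - j))"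
  unfolding sum_distrib_left
proof (rule sum.cong)
  fix l assume "l \<in> {Suc j..d}"
  then have "l - j = Suc (l - Suc j)" by auto
  then show "cX * (f l * cX ^ (l - Suc j)) = f l * cX ^ (l - j)" by (simp add: mult_ac)
qed simp

lemma Ea_rec: "j \<le> d \<Longrightarrow> Ea d j = X (VA (Suc j)) + cX * (Ea d (Suc j) :: 'k::comm_ring_1 mpoly)"
proof -
  assume j: "j \<le> d"
  have e: "Suc d - j = Suc (Suc d - Suc j)" using j by simp
  show ?thesis
    unfolding Ea_def sum.atLeast_Suc_atMost[OF j] distrib_left shift_sum[OF j] e
    by (simp add: algebra_simps)
qed

lemma Eb_rec: "j \<le> d \<Longrightarrow> Eb d j = X (VB (Suc j)) + cX * (Eb d (Suc j) :: 'k::comm_ring_1 mpoly)"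
proof -
  assume j: "j \<le> d"
  show ?thesis
    unfolding Eb_def sum.atLeast_Suc_atMost[OF j] shift_sum[OF j]
    by (simp add: algebra_simps)
qed

lemma Ea_top [simp]: "Ea d (Suc d) = 1"
  by (simp add: Ea_def)
lemma Eb_top [simp]: "Eb d (Suc d) = 0"
  by (simp add: Eb_def)

definition Fh :: "nat \<Rightarrow> 'k::comm_ring_1 mpoly" where "Fh d = Ea d 0"
definition Gh :: "nat \<Rightarrow> 'k::comm_ring_1 mpoly" where "Gh d = Eb d 0"

lemma Fh_expand: "Fh d = (\<Sum>l\<le>d. X (VA (Suc l)) * cX ^ l) + cX ^ Suc d"
  by (simp add: Fh_def Ea_def atLeast0AtMost)
lemma Gh_expand: "Gh d = (\<Sum>l\<le>d. X (VB (Suc l)) * cX ^ l)"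
  by (simp add: Gh_def Eb_def atLeast0AtMost)

definition conv :: "nat \<Rightarrow> (nat \<Rightarrow> 'k::comm_ring_1 mpoly) \<Rightarrow> 'k mpoly" where
  "conv d z = (\<Sum>l\<le>d. z l * cX ^ l)"

definition mulc :: "nat \<Rightarrow> (nat \<Rightarrow> 'k::comm_ring_1 mpoly) \<Rightarrow> (nat \<Rightarrow> 'k mpoly)" where
  "mulc d z = (\<lambda>l. if l \<le> d then (if l = 0 then 0 else z (l - 1)) - z d * X (VA (Suc l)) else 0)"

lemma conv_mulc:
  fixes z :: "nat \<Rightarrow> 'k::comm_ring_1 mpoly"
  shows "conv d (mulc d z) = cX * conv d z - z d * Fh d"
proof -
  define g where "g = (\<lambda>l. (if l = 0 then 0 else z (l - 1)) * (cX :: 'k mpoly) ^ l)"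
  have "(\<Sum>l\<le>Suc d. g l) = g 0 + (\<Sum>l\<le>d. g (Suc l))" by (rule sum.atMost_Suc_shift)
  also have "\<dots> = cX * conv d z" by (simp add: g_def conv_def sum_distrib_left mult_ac)
  finally have 1: "(\<Sum>l\<le>d. g l) + z d * cX ^ Suc d = cX * conv d z" by (simp add: g_def)
  have "conv d (mulc d z) = (\<Sum>l\<le>d. g l - z d * (X (VA (Suc l)) * cX ^ l))"
    unfolding conv_def mulc_def g_def by (rule sum.cong) (auto simp: algebra_simps)
  also have "\<dots> = (\<Sum>l\<le>d. g l) - z d * (\<Sum>l\<le>d. X (VA (Suc l)) * cX ^ l)"
    by (simp add: sum_subtractf sum_distrib_left)
  also have "\<dots> = cX * conv d z - z d * Fh d"
    using 1 unfolding Fh_expand by (simp add: algebra_simps)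
  finally show ?thesis .
qed

primrec col :: "nat \<Rightarrow> nat \<Rightarrow> nat \<Rightarrow> 'k::comm_ring_1 mpoly" where
  "col d 0 = (\<lambda>l. if l \<le> d then X (VB (Suc l)) else 0)"
| "col d (Suc m) = mulc d (col d m)"

lemma conv_col: "\<exists>W::'k::comm_ring_1 mpoly. conv d (col d m) = Gh d * cX ^ m - W * Fh d"
proof (induction m)
  case 0
  have "conv d (col d 0) = Gh d" unfolding Gh_expand conv_def by simp
  then show ?case by (intro exI[of _ 0]) simp
next
  case (Suc m)
  then obtain W :: "'k mpoly" where W: "conv d (col d m) = Gh d * cX ^ m - W * Fh d" by blast
  have "conv d (col d (Suc m)) = Gh d * cX ^ Suc m - (cX * W + col d m d) * Fh d"
    by (simp add: conv_mulc W algebra_simps)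
  then show ?case by blast
qed

definition phi :: "nat \<Rightarrow> (nat \<Rightarrow> 'k::comm_ring_1 mpoly) \<Rightarrow> (nat \<Rightarrow> 'k mpoly)" where
  "phi d y = (\<lambda>l. if l \<le> d then (\<Sum>m\<le>d. col d m l * y m) else 0)"

definition psi :: "nat \<Rightarrow> (nat \<Rightarrow> 'k::comm_ring_1 mpoly) \<Rightarrow> 'k mpoly" where
  "psi d x = (\<Sum>l\<le>d. fmap d (x l) * cX ^ l)"

lemma conv_phi:
  fixes y :: "nat \<Rightarrow> 'k::comm_ring_1 mpoly"
  shows "\<exists>W. conv d (phi d y) = Gh d * conv d y - W * Fh d"
proof -
  have "\<forall>m. \<exists>W::'k mpoly. conv d (col d m) = Gh d * cX ^ m - W * Fh d" using conv_col by blast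
  then obtain Wf :: "nat \<Rightarrow> 'k mpoly" where Wf: "\<And>m. conv d (col d m) = Gh d * cX ^ m - Wf m * Fh d" by metis
  have "conv d (phi d y) = (\<Sum>l\<le>d. (\<Sum>m\<le>d. col d m l * y m) * cX ^ l)"
    unfolding conv_def phi_def by (rule sum.cong) auto
  also have "\<dots> = (\<Sum>l\<le>d. \<Sum>m\<le>d. y m * (col d m l * cX ^ l))"
    unfolding sum_distrib_right by (intro sum.cong refl) (simp add: mult_ac)
  also have "\<dots> = (\<Sum>m\<le>d. y m * conv d (col d m))"
    unfolding conv_def sum_distrib_left by (rule sum.swap)
  also have "\<dots> = (\<Sum>m\<le>d. Gh d * (y m * cX ^ m) - (y m * Wf m) * Fh d)"
    unfolding Wf by (simp add: algebra_simps)
  also have "\<dots> = Gh d * conv d y - (\<Sum>m\<le>d. y m * Wf m) * Fh d"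
    unfolding conv_def by (simp add: sum_subtractf sum_distrib_left sum_distrib_right)
  finally show ?thesis by blast
qed


lemma aB_0 [simp]: "aB d 0 = 0" by (simp add: aB_def)
lemma aB_top [simp]: "aB d (Suc d) = 1" by (simp add: aB_def)
lemma aB_mid: "1 \<le> j \<Longrightarrow> j \<le> d \<Longrightarrow> aB d j = X (VA j)" by (simp add: aB_def)
lemma bB_0 [simp]: "bB d 0 = 0" by (simp add: bB_def)
lemma bB_top [simp]: "bB d (Suc d) = 0" by (simp add: bB_def)
lemma bB_mid: "1 \<le> j \<Longrightarrow> j \<le> d \<Longrightarrow> bB d j = X (VB j)" by (simp add: bB_def)

lemma S_Ea:
  assumes h: "hom S" and c: "S cX = cX"
    and a: "\<And>i. 1 \<le> i \<Longrightarrow> i \<le> Suc d \<Longrightarrow> S (X (VA i)) = aB d (i - 1) - cX * aB d i"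
    and j: "j \<le> Suc d"
  shows "S (Ea d j) = (aB d j :: 'k::comm_ring_1 mpoly)"
  using j
proof (induction j rule: inc_induct)
  case base then show ?case by (simp add: hom_one[OF h])
next
  case (step n)
  then show ?case
    by (simp add: Ea_rec hom_add[OF h] hom_mult[OF h] c a)
qed

lemma S_Eb:
  assumes h: "hom S" and c: "S cX = cX"
    and a: "\<And>i. 1 \<le> i \<Longrightarrow> i \<le> Suc d \<Longrightarrow> S (X (VB i)) = bB d (i - 1) - cX * bB d i"
    and j: "j \<le> Suc d"
  shows "S (Eb d j) = (bB d j :: 'k::comm_ring_1 mpoly)"
  using j
proof (induction j rule: inc_induct)
  case base then show ?case by (simp add: hom_zero[OF h])
next
  case (step n)
  then show ?case
    by (simp add: Eb_rec hom_add[OF h] hom_mult[OF h] c a)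
qed

lemma H_aB:
  assumes h: "hom S" and e: "\<And>j. 1 \<le> j \<Longrightarrow> j \<le> d \<Longrightarrow> S (X (VA j)) = Ea d j"
    and j: "j \<le> Suc d"
  shows "S (aB d j) = (if j = 0 then 0 else (Ea d j :: 'k::comm_ring_1 mpoly))"
proof -
  consider "j = 0" | "j = Suc d" | "1 \<le> j \<and> j \<le> d" using j by linarith
  then show ?thesis
    by cases (auto simp: hom_zero[OF h] hom_one[OF h] aB_mid e)
qed

lemma H_bB:
  assumes h: "hom S" and e: "\<And>j. 1 \<le> j \<Longrightarrow> j \<le> d \<Longrightarrow> S (X (VB j)) = Eb d j"
    and j: "j \<le> Suc d"
  shows "S (bB d j) = (if j = 0 then 0 else (Eb d j :: 'k::comm_ring_1 mpoly))"
proof -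
  consider "j = 0" | "j = Suc d" | "1 \<le> j \<and> j \<le> d" using j by linarith
  then show ?thesis
    by cases (auto simp: hom_zero[OF h] bB_mid e)
qed

lemma H_fA:
  assumes h: "hom S" and c: "S cX = cX" and e: "\<And>j. 1 \<le> j \<Longrightarrow> j \<le> d \<Longrightarrow> S (X (VA j)) = Ea d j"
    and i: "1 \<le> i" "i \<le> Suc d"
  shows "S (aB d (i - 1) - cX * aB d i) = X (VA i) - (if i = 1 then Fh d else (0 :: 'k::comm_ring_1 mpoly))"
proof -
  have 1: "S (aB d (i - 1)) = (if i - 1 = 0 then 0 else Ea d (i - 1))" using H_aB[OF h e] i by simp
  have 2: "S (aB d i) = Ea d i" using H_aB[OF h e, of i] i by simp
  have i1: "i - 1 \<le> d" using i by arith
  have r: "Ea d (i - 1) = (X (VA i) :: 'k mpoly) + cX * Ea d i" using Ea_rec[OF i1] i by (simp add: Suc_diff_1)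
  show ?thesis
  proof (cases "i = 1")
    case True
    then have r1: "Ea d 0 = (X (VA 1) :: 'k mpoly) + cX * Ea d 1" using r by simp
    show ?thesis unfolding hom_diff[OF h] hom_mult[OF h] 1 2 c using True
      by (simp add: Fh_def r1)
  next
    case False
    have ne: "i - 1 \<noteq> 0" using False i by arith
    have e: "Ea d (i - 1) - cX * Ea d i = (X (VA i) :: 'k mpoly)" using r by simp
    show ?thesis unfolding hom_diff[OF h] hom_mult[OF h] 1 2 c using ne e False by simp
  qed
qed

lemma H_fB:
  assumes h: "hom S" and c: "S cX = cX" and e: "\<And>j. 1 \<le> j \<Longrightarrow> j \<le> d \<Longrightarrow> S (X (VB j)) = Eb d j"
    and i: "1 \<le> i" "i \<le> Suc d"
  shows "S (bB d (i - 1) - cX * bB d i) = X (VB i) - (if i = 1 then Gh d else (0 :: 'k::comm_ring_1 mpoly))"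
proof -
  have 1: "S (bB d (i - 1)) = (if i - 1 = 0 then 0 else Eb d (i - 1))" using H_bB[OF h e] i by simp
  have 2: "S (bB d i) = Eb d i" using H_bB[OF h e, of i] i by (cases "i = Suc d") auto
  have i1: "i - 1 \<le> d" using i by arith
  have r: "Eb d (i - 1) = (X (VB i) :: 'k mpoly) + cX * Eb d i" using Eb_rec[OF i1] i by (simp add: Suc_diff_1)
  show ?thesis
  proof (cases "i = 1")
    case True
    then have r1: "Eb d 0 = (X (VB 1) :: 'k mpoly) + cX * Eb d 1" using r by simp
    show ?thesis unfolding hom_diff[OF h] hom_mult[OF h] 1 2 c using True
      by (simp add: Gh_def r1)
  next
    case False
    have ne: "i - 1 \<noteq> 0" using False i by arith
    have e: "Eb d (i - 1) - cX * Eb d i = (X (VB i) :: 'k mpoly)" using r by simp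
    show ?thesis unfolding hom_diff[OF h] hom_mult[OF h] 1 2 c using ne e False by simp
  qed
qed

definition inI :: "'k::comm_ring_1 mpoly \<Rightarrow> 'k mpoly \<Rightarrow> var set \<Rightarrow> 'k mpoly \<Rightarrow> bool" where
  "inI F G V p \<longleftrightarrow> (\<exists>u v. vars_of u \<subseteq> V \<and> vars_of v \<subseteq> V \<and> p = u * F + v * G)"

lemma ideal_lemma:
  fixes p :: "'k::comm_ring_1 mpoly"
  assumes h: "hom H" and F: "vars_of F \<subseteq> V" and G: "vars_of G \<subseteq> V"
    and c: "\<And>a. H (CC a) = CC a" and x: "\<And>v. v \<in> V \<Longrightarrow> inI F G V (H (X v) - X v)"
    and p: "vars_of p \<subseteq> V"
  shows "inI F G V (H p - p)"
proof -
  have "vars_of p \<subseteq> V \<and> inI F G V (H p - p)"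
  proof (rule mpoly_induct[where P = "\<lambda>p. vars_of p \<subseteq> V \<and> inI F G V (H p - p)", OF p])
    fix a
    have "H (CC a) - CC a = 0 * F + 0 * G" unfolding c by simp
    then show "vars_of (CC a) \<subseteq> V \<and> inI F G V (H (CC a) - CC a)"
      unfolding inI_def by (intro conjI exI[of _ 0]) simp_all
  next
    fix p q assume P: "vars_of p \<subseteq> V \<and> inI F G V (H p - p)" and Q: "vars_of q \<subseteq> V \<and> inI F G V (H q - q)"
    obtain u1 v1 where uv1: "vars_of u1 \<subseteq> V" "vars_of v1 \<subseteq> V" "H p - p = u1 * F + v1 * G"
      using P unfolding inI_def by blast
    obtain u2 v2 where uv2: "vars_of u2 \<subseteq> V" "vars_of v2 \<subseteq> V" "H q - q = u2 * F + v2 * G"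
      using Q unfolding inI_def by blast
    have "H (p + q) - (p + q) = (H p - p) + (H q - q)" by (simp add: hom_add[OF h])
    also have "\<dots> = (u1 + u2) * F + (v1 + v2) * G" unfolding uv1(3) uv2(3) by (simp add: distrib_right)
    finally have e: "H (p + q) - (p + q) = (u1 + u2) * F + (v1 + v2) * G" .
    have "vars_of (u1 + u2) \<subseteq> V" by (rule vars_sub_add[OF uv1(1) uv2(1)])
    moreover have "vars_of (v1 + v2) \<subseteq> V" by (rule vars_sub_add[OF uv1(2) uv2(2)])
    ultimately have "inI F G V (H (p + q) - (p + q))" unfolding inI_def using e by blast
    moreover have "vars_of (p + q) \<subseteq> V" using P Q by (intro vars_sub_add) auto
    ultimately show "vars_of (p + q) \<subseteq> V \<and> inI F G V (H (p + q) - (p + q))" by blast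
  next
    fix p w assume P: "vars_of p \<subseteq> V \<and> inI F G V (H p - p)" and w: "w \<in> V"
    obtain u2 v2 where u2: "vars_of u2 \<subseteq> V" "vars_of v2 \<subseteq> V" "H p - p = u2 * F + v2 * G"
      using P unfolding inI_def by blast
    obtain u1 v1 where u1: "vars_of u1 \<subseteq> V" "vars_of v1 \<subseteq> V" "H (X w) - X w = u1 * F + v1 * G"
      using x[OF w] unfolding inI_def by blast
    have Hp: "H p = p + u2 * F + v2 * G" using u2(3) by (simp add: algebra_simps)
    have pV: "vars_of p \<subseteq> V" using P by blast
    have vHp: "vars_of (H p) \<subseteq> V" unfolding Hp
      by (rule vars_sub_add[OF vars_sub_add[OF pV vars_sub_mult[OF u2(1) F]] vars_sub_mult[OF u2(2) G]])
    have Xw: "vars_of (X w :: 'k mpoly) \<subseteq> V" using w by (rule vars_sub_X)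
    have "H (X w * p) - X w * p = (H (X w) - X w) * H p + X w * (H p - p)"
      by (simp add: hom_mult[OF h] algebra_simps)
    also have "\<dots> = (u1 * H p + X w * u2) * F + (v1 * H p + X w * v2) * G"
      unfolding u1(3) u2(3) by (simp add: algebra_simps)
    finally have e: "H (X w * p) - X w * p = (u1 * H p + X w * u2) * F + (v1 * H p + X w * v2) * G" .
    have a1: "vars_of (u1 * H p + X w * u2) \<subseteq> V"
      by (rule vars_sub_add[OF vars_sub_mult[OF u1(1) vHp] vars_sub_mult[OF Xw u2(1)]])
    have a2: "vars_of (v1 * H p + X w * v2) \<subseteq> V"
      by (rule vars_sub_add[OF vars_sub_mult[OF u1(2) vHp] vars_sub_mult[OF Xw u2(2)]])
    have "inI F G V (H (X w * p) - X w * p)" unfolding inI_def using e a1 a2 by blast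
    moreover have "vars_of (X w * p) \<subseteq> V" by (rule vars_sub_mult[OF Xw pV])
    ultimately show "vars_of (X w * p) \<subseteq> V \<and> inI F G V (H (X w * p) - X w * p)" by blast
  qed
  then show ?thesis by blast
qed


lemma Tc_Ea:
  assumes j: "j \<le> Suc d"
  shows "Tw VC (Ea d j :: 'k::comm_ring_1 mpoly) \<noteq> 0 \<and> degree (Tw VC (Ea d j :: 'k mpoly)) = Suc d - j
         \<and> coeff (Tw VC (Ea d j :: 'k mpoly)) (Suc d - j) = 1"
  using j
proof (induction j rule: inc_induct)
  case base then show ?case by (simp add: hom_one[OF hom_Tw])
next
  case (step n)
  let ?P = "Tw VC (Ea d (Suc n) :: 'k mpoly)"
  have e: "Tw VC (Ea d n :: 'k mpoly) = pCons (X (VA (Suc n))) ?P"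
    using step(2) by (simp add: Ea_rec hom_add[OF hom_Tw] hom_mult[OF hom_Tw] Tw_X)
  have s: "Suc d - n = Suc (Suc d - Suc n)" using step(2) by simp
  show ?case unfolding e s using step(3) by simp
qed

lemma conv_unique:
  fixes z :: "nat \<Rightarrow> 'k::comm_ring_1 mpoly"
  assumes nz: "\<And>l. VC \<notin> vars_of (z l)" and eq: "conv d z = S * Fh d" and l: "l \<le> d"
  shows "z l = 0"
proof -
  let ?T = "Tw VC :: 'k mpoly \<Rightarrow> 'k mpoly poly"
  have hT: "hom ?T" by (rule hom_Tw)
  have TX: "?T cX = [:0, 1:]" by (simp add: Tw_X)
  have Tconv: "?T (conv d z) = (\<Sum>l\<le>d. smult (z l) (monom 1 l))"
    unfolding conv_def hom_sum[OF hT] hom_mult[OF hT] hom_power[OF hT] TX Tw_const[OF nz]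
    by (simp add: monom_altdef)
  have coeffT: "coeff (?T (conv d z)) n = (if n \<le> d then z n else 0)" for n
    unfolding Tconv coeff_sum by (simp add: if_distrib[of "\<lambda>x. z _ * x"] cong: if_cong)
  have TF: "?T (Fh d) \<noteq> 0" "degree (?T (Fh d)) = Suc d" "coeff (?T (Fh d)) (Suc d) = 1"
    using Tc_Ea[of 0 d] unfolding Fh_def by auto
  have TS: "?T S = 0"
  proof (rule ccontr)
    assume ne: "?T S \<noteq> 0"
    have "coeff (?T S * ?T (Fh d)) (degree (?T S) + degree (?T (Fh d))) = coeff (?T S) (degree (?T S))"
      using coeff_mult_degree_sum[of "?T S" "?T (Fh d)"] TF(2,3) by simp
    also have "\<dots> \<noteq> 0" using ne by simp
    finally have "coeff (?T (conv d z)) (degree (?T S) + Suc d) \<noteq> 0"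
      using TF by (simp add: eq hom_mult[OF hT])
    then show False unfolding coeffT by simp
  qed
  have "?T (conv d z) = 0" by (simp add: eq hom_mult[OF hT] TS)
  then have "coeff (?T (conv d z)) l = 0" by simp
  then show ?thesis unfolding coeffT using l by simp
qed

lemma vars_Eb1: "VB 1 \<notin> vars_of (Eb d 1 :: 'k::comm_ring_1 mpoly)"
proof -
  have "vars_of (Eb d 1 :: 'k mpoly) \<subseteq> - {VB 1}"
    unfolding Eb_def
    by (intro vars_sub_sum vars_sub_mult vars_sub_X vars_sub_power) auto
  then show ?thesis by blast
qed

lemma Gh_nzd:
  fixes q :: "'k::comm_ring_1 mpoly"
  assumes "Gh d * q = 0"
  shows "q = 0"
proof -
  let ?T = "Tw (VB 1) :: 'k mpoly \<Rightarrow> 'k mpoly poly"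
  have hT: "hom ?T" by (rule hom_Tw)
  have G: "Gh d = X (VB 1) + cX * (Eb d 1 :: 'k mpoly)" unfolding Gh_def using Eb_rec[of 0 d] by simp
  have TG: "?T (Gh d) = pCons (cX * Eb d 1) 1"
    unfolding G hom_add[OF hT] hom_mult[OF hT] Tw_const[OF vars_Eb1] by (simp add: Tw_X)
  have Tq: "?T q = 0"
  proof (rule ccontr)
    assume ne: "?T q \<noteq> 0"
    have dG: "degree (?T (Gh d)) = 1" "coeff (?T (Gh d)) 1 = 1" unfolding TG by simp_all
    have "coeff (?T (Gh d) * ?T q) (degree (?T (Gh d)) + degree (?T q)) = coeff (?T q) (degree (?T q))"
      using coeff_mult_degree_sum[of "?T (Gh d)" "?T q"] dG by simp
    also have "\<dots> \<noteq> 0" using ne by simp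
    finally have nz: "coeff (?T (Gh d) * ?T q) (degree (?T (Gh d)) + degree (?T q)) \<noteq> 0" .
    have "?T (Gh d) * ?T q = 0" using assms hom_mult[OF hT, of "Gh d" q] hom_zero[OF hT] by simp
    then show False using nz by simp
  qed
  show ?thesis using Tw_inv[of "VB 1" q] unfolding Tq by simp
qed


definition AV :: "nat \<Rightarrow> var set" where
  "AV e = {VA i |i. 1 \<le> i \<and> i \<le> e} \<union> {VB i |i. 1 \<le> i \<and> i \<le> e}"

lemma polyA_iff: "p \<in> polyA e \<longleftrightarrow> vars_of p \<subseteq> AV e"
  by (simp add: polyA_def AV_def)
lemma polyB_iff: "p \<in> polyB d \<longleftrightarrow> vars_of p \<subseteq> AV d \<union> {VC}"
  by (simp add: polyB_def AV_def)
lemma freeMod_iff: "z \<in> freeMod d \<longleftrightarrow> (\<forall>l. vars_of (z l) \<subseteq> AV (Suc d)) \<and> (\<forall>l>d. z l = 0)"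
  by (simp add: freeMod_def polyA_iff)

lemma VA_AV [simp]: "VA i \<in> AV e \<longleftrightarrow> 1 \<le> i \<and> i \<le> e" by (auto simp: AV_def)
lemma VB_AV [simp]: "VB i \<in> AV e \<longleftrightarrow> 1 \<le> i \<and> i \<le> e" by (auto simp: AV_def)
lemma VC_AV [simp]: "VC \<notin> AV e" by (auto simp: AV_def)

definition Vc :: "nat \<Rightarrow> var set" where "Vc d = AV (Suc d) \<union> {VC}"

lemma vars_Ea: "vars_of (Ea d j :: 'k::comm_ring_1 mpoly) \<subseteq> Vc d"
  unfolding Ea_def Vc_def
  by (intro vars_sub_add vars_sub_sum vars_sub_mult vars_sub_X vars_sub_power) auto
lemma vars_Eb: "vars_of (Eb d j :: 'k::comm_ring_1 mpoly) \<subseteq> Vc d"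
  unfolding Eb_def Vc_def
  by (intro vars_sub_add vars_sub_sum vars_sub_mult vars_sub_X vars_sub_power) auto
lemma vars_Fh: "vars_of (Fh d :: 'k::comm_ring_1 mpoly) \<subseteq> Vc d"
  unfolding Fh_def by (rule vars_Ea)
lemma vars_Gh: "vars_of (Gh d :: 'k::comm_ring_1 mpoly) \<subseteq> Vc d"
  unfolding Gh_def by (rule vars_Eb)

lemma vars_conv: "z \<in> freeMod d \<Longrightarrow> vars_of (conv d z) \<subseteq> Vc d"
  unfolding conv_def freeMod_iff Vc_def
  by (intro vars_sub_sum vars_sub_mult vars_sub_power vars_sub_X) auto

lemma conv_add: "conv d (\<lambda>l. x l + y l) = conv d x + conv d y"
  by (simp add: conv_def distrib_right sum.distrib)
lemma conv_diff: "conv d (\<lambda>l. x l - y l) = conv d x - conv d y"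
  by (simp add: conv_def left_diff_distrib sum_subtractf)
lemma conv_smul: "conv d (\<lambda>l. a * x l) = a * conv d x"
  by (simp add: conv_def sum_distrib_left mult.assoc)

lemma freeMod_add: "x \<in> freeMod d \<Longrightarrow> y \<in> freeMod d \<Longrightarrow> (\<lambda>l. x l + y l) \<in> freeMod d"
  unfolding freeMod_iff by (simp add: vars_sub_add)
lemma freeMod_diff: "x \<in> freeMod d \<Longrightarrow> y \<in> freeMod d \<Longrightarrow> (\<lambda>l. x l - y l) \<in> freeMod d"
  unfolding freeMod_iff by (simp add: vars_sub_diff)
lemma freeMod_smul: "vars_of a \<subseteq> AV (Suc d) \<Longrightarrow> x \<in> freeMod d \<Longrightarrow> (\<lambda>l. a * x l) \<in> freeMod d"
  unfolding freeMod_iff by (simp add: vars_sub_mult)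

lemma vars_aB: "j \<le> Suc d \<Longrightarrow> vars_of (aB d j :: 'k::comm_ring_1 mpoly) \<subseteq> AV d"
  unfolding aB_def by (auto intro!: vars_sub_X)
lemma vars_bB: "j \<le> Suc d \<Longrightarrow> vars_of (bB d j :: 'k::comm_ring_1 mpoly) \<subseteq> AV d"
  unfolding bB_def by (auto intro!: vars_sub_X)

lemma mulc_freeMod: "z \<in> freeMod d \<Longrightarrow> mulc d z \<in> freeMod d"
  unfolding freeMod_iff mulc_def
  by (simp add: vars_sub_diff vars_sub_mult vars_sub_X)

lemma division:
  fixes p :: "'k::comm_ring_1 mpoly"
  assumes p: "vars_of p \<subseteq> Vc d"
  shows "\<exists>Q z. z \<in> freeMod d \<and> p = Q * Fh d + conv d z"
proof (rule mpoly_induct[where P = "\<lambda>p. \<exists>Q z. z \<in> freeMod d \<and> p = Q * Fh d + conv d z", OF p])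
  fix a :: 'k
  let ?z = "\<lambda>l. if l = 0 then CC a else (0 :: 'k mpoly)"
  have "conv d ?z = (\<Sum>l\<le>d. if l = 0 then CC a else 0)" unfolding conv_def by (rule sum.cong) auto
  also have "\<dots> = CC a" by (simp add: sum.delta)
  finally have "conv d ?z = CC a" .
  moreover have "?z \<in> freeMod d" unfolding freeMod_iff by auto
  ultimately show "\<exists>Q z. z \<in> freeMod d \<and> CC a = Q * Fh d + conv d z"
    by (intro exI[of _ 0] exI[of _ ?z]) simp
next
  fix p q :: "'k mpoly"
  assume "\<exists>Q z. z \<in> freeMod d \<and> p = Q * Fh d + conv d z" "\<exists>Q z. z \<in> freeMod d \<and> q = Q * Fh d + conv d z"
  then obtain Q1 z1 Q2 z2 where "z1 \<in> freeMod d" "p = Q1 * Fh d + conv d z1" "z2 \<in> freeMod d" "q = Q2 * Fh d + conv d z2"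
    by blast
  then show "\<exists>Q z. z \<in> freeMod d \<and> p + q = Q * Fh d + conv d z"
    by (intro exI[of _ "Q1 + Q2"] exI[of _ "\<lambda>l. z1 l + z2 l"]) (simp add: freeMod_add conv_add algebra_simps)
next
  fix p :: "'k mpoly" and w
  assume "\<exists>Q z. z \<in> freeMod d \<and> p = Q * Fh d + conv d z" and w: "w \<in> Vc d"
  then obtain Q z where z: "z \<in> freeMod d" "p = Q * Fh d + conv d z" by blast
  show "\<exists>Q z. z \<in> freeMod d \<and> X w * p = Q * Fh d + conv d z"
  proof (cases "w = VC")
    case True
    have "X w * p = (cX * Q + z d) * Fh d + conv d (mulc d z)"
      using z(2) True by (simp add: conv_mulc algebra_simps)
    then show ?thesis using mulc_freeMod[OF z(1)] by blast
  next
    case False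
    then have "w \<in> AV (Suc d)" using w by (simp add: Vc_def)
    then have "(\<lambda>l. X w * z l) \<in> freeMod d" using z(1) by (intro freeMod_smul vars_sub_X)
    moreover have "X w * p = (X w * Q) * Fh d + conv d (\<lambda>l. X w * z l)"
      using z(2) by (simp add: conv_smul algebra_simps)
    ultimately show ?thesis by blast
  qed
qed


definition gam :: "nat \<Rightarrow> var \<Rightarrow> 'k::comm_ring_1 mpoly" where
  "gam d v = (case v of VA i \<Rightarrow> fimg d (VA i) | VB i \<Rightarrow> fimg d (VB i) | VC \<Rightarrow> X VC)"
definition eta :: "nat \<Rightarrow> var \<Rightarrow> 'k::comm_ring_1 mpoly" where
  "eta d v = (case v of VA j \<Rightarrow> Ea d j | VB j \<Rightarrow> Eb d j | VC \<Rightarrow> X VC)"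
definition rh :: "nat \<Rightarrow> var \<Rightarrow> 'k::comm_ring_1 mpoly" where
  "rh d v = (case v of VA i \<Rightarrow> fimg d (VA i) | VB i \<Rightarrow> X (VB i) | VC \<Rightarrow> X VC)"
definition eta2 :: "nat \<Rightarrow> var \<Rightarrow> 'k::comm_ring_1 mpoly" where
  "eta2 d v = (case v of VA j \<Rightarrow> Ea d j | VB j \<Rightarrow> X (VB j) | VC \<Rightarrow> X VC)"

lemma gam_simps [simp]: "gam d (VA i) = aB d (i - 1) - cX * aB d i" "gam d (VB i) = bB d (i - 1) - cX * bB d i"
  "gam d VC = cX"
  by (simp_all add: gam_def)
lemma rh_simps [simp]: "rh d (VA i) = aB d (i - 1) - cX * aB d i" "rh d (VB i) = X (VB i)"
  "rh d VC = cX"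
  by (simp_all add: rh_def)
lemma eta_simps [simp]: "eta d (VA i) = Ea d i" "eta d (VB i) = Eb d i" "eta d VC = cX"
  by (simp_all add: eta_def)
lemma eta2_simps [simp]: "eta2 d (VA i) = Ea d i" "eta2 d (VB i) = X (VB i)" "eta2 d VC = cX"
  by (simp_all add: eta2_def)

lemma g_Ea: "j \<le> Suc d \<Longrightarrow> subst (gam d) (Ea d j) = (aB d j :: 'k::comm_ring_1 mpoly)"
  by (rule S_Ea[OF hom_subst]) simp_all
lemma g_Eb: "j \<le> Suc d \<Longrightarrow> subst (gam d) (Eb d j) = (bB d j :: 'k::comm_ring_1 mpoly)"
  by (rule S_Eb[OF hom_subst]) simp_all
lemma r_Ea: "j \<le> Suc d \<Longrightarrow> subst (rh d) (Ea d j) = (aB d j :: 'k::comm_ring_1 mpoly)"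
  by (rule S_Ea[OF hom_subst]) simp_all

lemma g_F: "subst (gam d) (Fh d) = (0 :: 'k::comm_ring_1 mpoly)"
  unfolding Fh_def by (simp add: g_Ea)
lemma g_G: "subst (gam d) (Gh d) = (0 :: 'k::comm_ring_1 mpoly)"
  unfolding Gh_def by (simp add: g_Eb)
lemma r_F: "subst (rh d) (Fh d) = (0 :: 'k::comm_ring_1 mpoly)"
  unfolding Fh_def by (simp add: r_Ea)
lemma r_G: "subst (rh d) (Gh d) = (Gh d :: 'k::comm_ring_1 mpoly)"
proof (rule subst_id)
  have "vars_of (Gh d :: 'k mpoly) \<subseteq> range VB \<union> {VC}"
    unfolding Gh_expand by (intro vars_sub_sum vars_sub_mult vars_sub_X vars_sub_power) auto
  then show "\<And>v. v \<in> vars_of (Gh d :: 'k mpoly) \<Longrightarrow> rh d v = X v" by auto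
qed

lemma gh_id:
  fixes b :: "'k::comm_ring_1 mpoly"
  assumes b: "vars_of b \<subseteq> AV d \<union> {VC}"
  shows "subst (gam d) (subst (eta d) b) = b"
proof -
  have "(subst (gam d) \<circ> subst (eta d)) b = id b"
  proof (rule hom_unique[OF hom_comp[OF hom_subst hom_subst] hom_id _ _ b])
    fix v assume "v \<in> AV d \<union> {VC}"
    then show "(subst (gam d) \<circ> subst (eta d)) (X v) = id (X v :: 'k mpoly)"
      by (auto simp: AV_def g_Ea g_Eb aB_mid bB_mid)
  qed simp
  then show ?thesis by simp
qed

lemma hg_ideal:
  fixes p :: "'k::comm_ring_1 mpoly"
  assumes p: "vars_of p \<subseteq> Vc d"
  shows "inI (Fh d) (Gh d) (Vc d) (subst (eta d) (subst (gam d) p) - p)"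
proof -
  have "inI (Fh d) (Gh d) (Vc d) ((subst (eta d) \<circ> subst (gam d)) p - p)"
  proof (rule ideal_lemma[OF hom_comp[OF hom_subst hom_subst] vars_Fh vars_Gh _ _ p])
    fix v assume v: "v \<in> Vc d"
    show "inI (Fh d) (Gh d) (Vc d) ((subst (eta d) \<circ> subst (gam d)) (X v) - (X v :: 'k mpoly))"
    proof (cases v)
      case (VA i)
      then have i: "1 \<le> i" "i \<le> Suc d" using v by (auto simp: Vc_def)
      have "(subst (eta d) \<circ> subst (gam d)) (X v) = subst (eta d) (aB d (i - 1) - cX * aB d i)"
        unfolding VA by simp
      also have "\<dots> = X (VA i) - (if i = 1 then Fh d else 0)"
        by (rule H_fA[OF hom_subst _ _ i]) simp_all
      finally have e: "(subst (eta d) \<circ> subst (gam d)) (X v) = X (VA i) - (if i = 1 then Fh d else 0)" .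
      have "(subst (eta d) \<circ> subst (gam d)) (X v) - (X v :: 'k mpoly) = (if i = 1 then - 1 else 0) * Fh d + 0 * Gh d"
        using e VA by (cases "i = 1") simp_all
      then show ?thesis unfolding inI_def
        by - (rule exI[of _ "if i = 1 then - 1 else 0"], rule exI[of _ 0], auto)
    next
      case (VB i)
      then have i: "1 \<le> i" "i \<le> Suc d" using v by (auto simp: Vc_def)
      have "(subst (eta d) \<circ> subst (gam d)) (X v) = subst (eta d) (bB d (i - 1) - cX * bB d i)"
        unfolding VB by simp
      also have "\<dots> = X (VB i) - (if i = 1 then Gh d else 0)"
        by (rule H_fB[OF hom_subst _ _ i]) simp_all
      finally have e: "(subst (eta d) \<circ> subst (gam d)) (X v) = X (VB i) - (if i = 1 then Gh d else 0)" .
      have "(subst (eta d) \<circ> subst (gam d)) (X v) - (X v :: 'k mpoly) = 0 * Fh d + (if i = 1 then - 1 else 0) * Gh d"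
        using e VB by (cases "i = 1") simp_all
      then show ?thesis unfolding inI_def
        by - (rule exI[of _ 0], rule exI[of _ "if i = 1 then - 1 else 0"], auto)
    next
      case VC
      then show ?thesis unfolding inI_def by (intro exI[of _ 0] exI[of _ 0]) simp
    qed
  qed simp
  then show ?thesis by simp
qed

lemma rh_ideal:
  fixes p :: "'k::comm_ring_1 mpoly"
  assumes p: "vars_of p \<subseteq> Vc d"
  shows "inI (Fh d) 0 (Vc d) (subst (eta2 d) (subst (rh d) p) - p)"
proof -
  have "inI (Fh d) 0 (Vc d) ((subst (eta2 d) \<circ> subst (rh d)) p - p)"
  proof (rule ideal_lemma[OF hom_comp[OF hom_subst hom_subst] vars_Fh _ _ _ p])
    fix v assume v: "v \<in> Vc d"
    show "inI (Fh d) 0 (Vc d) ((subst (eta2 d) \<circ> subst (rh d)) (X v) - (X v :: 'k mpoly))"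
    proof (cases v)
      case (VA i)
      then have i: "1 \<le> i" "i \<le> Suc d" using v by (auto simp: Vc_def)
      have "(subst (eta2 d) \<circ> subst (rh d)) (X v) = subst (eta2 d) (aB d (i - 1) - cX * aB d i)"
        unfolding VA by simp
      also have "\<dots> = X (VA i) - (if i = 1 then Fh d else 0)"
        by (rule H_fA[OF hom_subst _ _ i]) simp_all
      finally have e: "(subst (eta2 d) \<circ> subst (rh d)) (X v) = X (VA i) - (if i = 1 then Fh d else 0)" .
      have "(subst (eta2 d) \<circ> subst (rh d)) (X v) - (X v :: 'k mpoly) = (if i = 1 then - 1 else 0) * Fh d + 0 * 0"
        using e VA by (cases "i = 1") simp_all
      then show ?thesis unfolding inI_def
        by - (rule exI[of _ "if i = 1 then - 1 else 0"], rule exI[of _ 0], auto)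
    next
      case (VB i)
      then show ?thesis unfolding inI_def by (intro exI[of _ 0] exI[of _ 0]) simp
    next
      case VC
      then show ?thesis unfolding inI_def by (intro exI[of _ 0] exI[of _ 0]) simp
    qed
  qed simp_all
  then show ?thesis by simp
qed


lemma homog_aB: "j \<le> Suc d \<Longrightarrow> homog (wB d) (2 * (int d - int j + 1), 0) (aB d j :: 'k::comm_ring_1 mpoly)"
proof -
  assume j: "j \<le> Suc d"
  consider "j = 0" | "j = Suc d" | "1 \<le> j \<and> j \<le> d" using j by linarith
  then show ?thesis
  proof cases
    case 2 then show ?thesis using homog_one[of "wB d"] by simp
  next
    case 3 then show ?thesis by (simp add: aB_mid homog_X)
  qed simp
qed

lemma homog_bB: "j \<le> Suc d \<Longrightarrow> homog (wB d) (2 * (int d - int j + 1), -2) (bB d j :: 'k::comm_ring_1 mpoly)"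
proof -
  assume j: "j \<le> Suc d"
  consider "j = 0" | "j = Suc d" | "1 \<le> j \<and> j \<le> d" using j by linarith
  then show ?thesis
  proof cases
    case 3 then show ?thesis by (simp add: bB_mid homog_X)
  qed simp_all
qed

lemma homog_cX: "homog (wB d) (2, 0) (cX :: 'k::comm_ring_1 mpoly)"
  by (rule homog_X) simp

lemma homog_fimg:
  assumes v: "v \<in> AV (Suc d)"
  shows "homog (wB d) (wA (Suc d) v) (fimg d v :: 'k::comm_ring_1 mpoly)"
proof (cases v)
  case (VA i)
  then have i: "1 \<le> i" "i \<le> Suc d" using v by auto
  have h1: "homog (wB d) (2 * (int d - int (i - 1) + 1), 0) (aB d (i - 1) :: 'k mpoly)"
    using i by (intro homog_aB) simp
  have h2: "homog (wB d) (2 + 2 * (int d - int i + 1), 0 + 0) (cX * aB d i :: 'k mpoly)"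
    by (rule homog_mult[OF homog_cX homog_aB[OF i(2)]])
  have e1: "2 * (int d - int (i - 1) + 1) = 2 * (int (Suc d) - int i + 1)" using i by simp
  have e2: "2 + 2 * (int d - int i + 1) = 2 * (int (Suc d) - int i + 1)" by simp
  show ?thesis unfolding VA using h1 h2 e1 e2 by (simp add: homog_diff)
next
  case (VB i)
  then have i: "1 \<le> i" "i \<le> Suc d" using v by auto
  have h1: "homog (wB d) (2 * (int d - int (i - 1) + 1), -2) (bB d (i - 1) :: 'k mpoly)"
    using i by (intro homog_bB) simp
  have h2: "homog (wB d) (2 + 2 * (int d - int i + 1), 0 + -2) (cX * bB d i :: 'k mpoly)"
    by (rule homog_mult[OF homog_cX homog_bB[OF i(2)]])
  have e1: "2 * (int d - int (i - 1) + 1) = 2 * (int (Suc d) - int i + 1)" using i by simp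
  have e2: "2 + 2 * (int d - int i + 1) = 2 * (int (Suc d) - int i + 1)" by simp
  show ?thesis unfolding VB using h1 h2 e1 e2 by (simp add: homog_diff)
next
  case VC then show ?thesis using v by simp
qed

lemma homog_col:
  "l \<le> d \<Longrightarrow> homog (wA (Suc d)) (2 * (int d + 1) + 2 * int m - 2 * int l, -2) (col d m l :: 'k::comm_ring_1 mpoly)"
proof (induction m arbitrary: l)
  case 0
  then show ?case by (simp add: homog_X)
next
  case (Suc m)
  have h2: "homog (wA (Suc d)) ((2 * (int d + 1) + 2 * int m - 2 * int d) + 2 * (int (Suc d) - int (Suc l) + 1), -2 + 0)
              (col d m d * X (VA (Suc l)) :: 'k mpoly)"
    by (rule homog_mult[OF Suc.IH[OF order_refl]]) (rule homog_X, simp)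
  have h2': "homog (wA (Suc d)) (2 * (int d + 1) + 2 * int (Suc m) - 2 * int l, -2) (col d m d * X (VA (Suc l)) :: 'k mpoly)"
    using h2 Suc.prems by (simp add: algebra_simps)
  have h1: "homog (wA (Suc d)) (2 * (int d + 1) + 2 * int (Suc m) - 2 * int l, -2) (if l = 0 then 0 else col d m (l - 1) :: 'k mpoly)"
  proof (cases "l = 0")
    case False
    have "homog (wA (Suc d)) (2 * (int d + 1) + 2 * int m - 2 * int (l - 1), -2) (col d m (l - 1) :: 'k mpoly)"
      using Suc.prems by (intro Suc.IH) simp
    then show ?thesis using False by (simp add: algebra_simps of_nat_diff)
  qed simp
  show ?case using Suc.prems h1 h2' by (simp add: mulc_def homog_diff)
qed

lemma hom_fmap: "hom (fmap d)"
  unfolding fmap_def by (rule hom_subst)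

lemma col_freeMod: "col d m \<in> freeMod d"
proof (induction m)
  case 0 then show ?case unfolding freeMod_iff by (auto intro!: vars_sub_X)
next
  case (Suc m) then show ?case by (simp add: mulc_freeMod)
qed

lemma phi_freeMod:
  fixes y :: "nat \<Rightarrow> 'k::comm_ring_1 mpoly"
  assumes y: "y \<in> freeMod d"
  shows "phi d y \<in> freeMod d"
proof -
  have "vars_of (col d m l * y m) \<subseteq> AV (Suc d)" for m l
    using col_freeMod[of d m] y by (intro vars_sub_mult) (auto simp: freeMod_iff)
  then show ?thesis by (simp add: freeMod_iff phi_def vars_sub_sum)
qed

lemma phi_add: "phi d (madd x y) = madd (phi d x) (phi d y)"
  by (simp add: fun_eq_iff phi_def madd_def distrib_left sum.distrib)

lemma phi_smul: "phi d (smul a x) = smul a (phi d x)"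
  by (simp add: fun_eq_iff phi_def smul_def sum_distrib_left mult_ac)

lemma psi_add: "psi d (madd x y) = psi d x + psi d y"
  by (simp add: psi_def madd_def hom_add[OF hom_fmap] distrib_right sum.distrib)

lemma psi_smul: "psi d (smul a x) = fmap d a * psi d x"
  by (simp add: psi_def smul_def hom_mult[OF hom_fmap] sum_distrib_left mult_ac)

lemma vars_fimg: "v \<in> AV (Suc d) \<Longrightarrow> vars_of (fimg d v :: 'k::comm_ring_1 mpoly) \<subseteq> AV d \<union> {VC}"
proof (cases v)
  case (VA i)
  assume "v \<in> AV (Suc d)"
  then have "i - 1 \<le> Suc d" "i \<le> Suc d" using VA by auto
  then have a1: "vars_of (aB d (i - 1) :: 'k mpoly) \<subseteq> AV d \<union> {VC}"
    and a2: "vars_of (aB d i :: 'k mpoly) \<subseteq> AV d \<union> {VC}"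
    using vars_aB[of "i - 1" d] vars_aB[of i d] by auto
  have cx: "vars_of (cX :: 'k mpoly) \<subseteq> AV d \<union> {VC}" by (rule vars_sub_X) simp
  show ?thesis unfolding VA using vars_sub_diff[OF a1 vars_sub_mult[OF cx a2]] by simp
next
  case (VB i)
  assume "v \<in> AV (Suc d)"
  then have "i - 1 \<le> Suc d" "i \<le> Suc d" using VB by auto
  then have a1: "vars_of (bB d (i - 1) :: 'k mpoly) \<subseteq> AV d \<union> {VC}"
    and a2: "vars_of (bB d i :: 'k mpoly) \<subseteq> AV d \<union> {VC}"
    using vars_bB[of "i - 1" d] vars_bB[of i d] by auto
  have cx: "vars_of (cX :: 'k mpoly) \<subseteq> AV d \<union> {VC}" by (rule vars_sub_X) simp
  show ?thesis unfolding VB using vars_sub_diff[OF a1 vars_sub_mult[OF cx a2]] by simp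
qed simp

lemma vars_fmap: "vars_of p \<subseteq> AV (Suc d) \<Longrightarrow> vars_of (fmap d p :: 'k::comm_ring_1 mpoly) \<subseteq> AV d \<union> {VC}"
  unfolding fmap_def by (rule vars_subst) (auto dest: vars_fimg)

lemma psi_in: "x \<in> freeMod d \<Longrightarrow> psi d x \<in> polyB d"
  unfolding polyB_iff psi_def freeMod_iff
  by (intro vars_sub_sum vars_sub_mult vars_sub_power vars_sub_X vars_fmap) auto

lemma psi_g: "x \<in> freeMod d \<Longrightarrow> psi d x = subst (gam d) (conv d x)"
proof -
  assume x: "x \<in> freeMod d"
  have "subst (gam d) (x l) = fmap d (x l)" for l
    unfolding fmap_def
  proof (rule subst_cong)
    fix v assume "v \<in> vars_of (x l)"
    then have "v \<in> AV (Suc d)" using x unfolding freeMod_iff by auto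
    then show "gam d v = fimg d v" by (cases v) (auto simp: gam_def)
  qed
  then show ?thesis
    unfolding psi_def conv_def
    by (simp add: hom_sum[OF hom_subst] hom_mult[OF hom_subst] hom_power[OF hom_subst])
qed

lemma phi_homog:
  assumes y: "y \<in> freeMod d" and h: "homogM d (shiftSub d) ij y"
  shows "homogM d shiftMid ij (phi d y)"
  unfolding homogM_def
proof (intro allI impI)
  fix l assume l: "l \<le> d"
  have "homog (wA (Suc d)) (fst ij - 2 * int l, snd ij) (col d m l * y m)" if m: "m \<le> d" for m
  proof -
    have hy: "homog (wA (Suc d)) (fst ij - (2 * (int d + 1) + 2 * int m), snd ij + 2) (y m)"
      using h m unfolding homogM_def shiftSub_def by simp
    have "homog (wA (Suc d)) ((2 * (int d + 1) + 2 * int m - 2 * int l) + (fst ij - (2 * (int d + 1) + 2 * int m)), -2 + (snd ij + 2)) (col d m l * y m)"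
      by (rule homog_mult[OF homog_col[OF l] hy])
    then show ?thesis by (simp add: algebra_simps)
  qed
  then have "homog (wA (Suc d)) (fst ij - 2 * int l, snd ij) (\<Sum>m\<le>d. col d m l * y m)"
    by (intro homog_sum) auto
  then show "homog (wA (d + 1)) (fst ij - fst (shiftMid l), snd ij - snd (shiftMid l)) (phi d y l)"
    using l by (simp add: phi_def shiftMid_def)
qed

lemma psi_homog:
  assumes x: "x \<in> freeMod d" and h: "homogM d shiftMid ij x"
  shows "homog (wB d) ij (psi d x)"
  unfolding psi_def
proof (rule homog_sum)
  fix l assume "l \<in> {..d}"
  then have l: "l \<le> d" by simp
  have hx: "homog (wA (Suc d)) (fst ij - 2 * int l, snd ij) (x l)"
    using h l unfolding homogM_def shiftMid_def by simp
  have hf: "homog (wB d) (fst ij - 2 * int l, snd ij) (fmap d (x l))"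
    unfolding fmap_def
  proof (rule homog_subst[OF hx])
    fix v assume "v \<in> vars_of (x l)"
    then have "v \<in> AV (Suc d)" using x unfolding freeMod_iff by auto
    then show "homog (wB d) (wA (Suc d) v) (fimg d v)" by (rule homog_fimg)
  qed
  have hc: "homog (wB d) (int l * 2, int l * 0) (cX ^ l)"
    by (rule homog_power[OF homog_cX])
  have "homog (wB d) ((fst ij - 2 * int l) + int l * 2, snd ij + int l * 0) (fmap d (x l) * cX ^ l)"
    by (rule homog_mult[OF hf hc])
  then show "homog (wB d) ij (fmap d (x l) * cX ^ l)" by simp
qed


lemma psi_phi:
  fixes y :: "nat \<Rightarrow> 'k::comm_ring_1 mpoly"
  assumes y: "y \<in> freeMod d"
  shows "psi d (phi d y) = 0"
proof -
  obtain W :: "'k mpoly" where W: "conv d (phi d y) = Gh d * conv d y - W * Fh d"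
    using conv_phi by blast
  show ?thesis
    using psi_g[OF phi_freeMod[OF y]]
    by (simp add: W hom_diff[OF hom_subst] hom_mult[OF hom_subst] g_F g_G)
qed

lemma VC_free: "x \<in> freeMod d \<Longrightarrow> VC \<notin> vars_of (x l)"
  unfolding freeMod_iff using VC_AV by blast

lemma ker_sub:
  fixes x :: "nat \<Rightarrow> 'k::comm_ring_1 mpoly"
  assumes x: "x \<in> freeMod d" and z: "psi d x = 0"
  shows "\<exists>y\<in>freeMod d. x = phi d y"
proof -
  have c0: "subst (gam d) (conv d x) = 0" using z psi_g[OF x] by simp
  obtain u v :: "'k mpoly" where uv: "vars_of u \<subseteq> Vc d" "vars_of v \<subseteq> Vc d"
    "subst (eta d) (subst (gam d) (conv d x)) - conv d x = u * Fh d + v * Gh d"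
    using hg_ideal[OF vars_conv[OF x]] unfolding inI_def by blast
  have h0: "- conv d x = u * Fh d + v * Gh d"
    using uv(3) c0 by (simp add: hom_zero[OF hom_subst])
  have cx: "conv d x = - (u * Fh d + v * Gh d)"
    using arg_cong[OF h0, of uminus] by simp
  obtain Q and y :: "nat \<Rightarrow> 'k mpoly" where Qy: "y \<in> freeMod d" "- v = Q * Fh d + conv d y"
    using division[of "- v" d] uv(2) by auto
  obtain W :: "'k mpoly" where W: "conv d (phi d y) = Gh d * conv d y - W * Fh d"
    using conv_phi by blast
  have vneg: "v = - (Q * Fh d + conv d y)" using arg_cong[OF Qy(2), of uminus] by simp
  have "conv d (\<lambda>l. x l - phi d y l) = (Q * Gh d - u + W) * Fh d"
    unfolding conv_diff cx W vneg by (simp add: algebra_simps)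
  moreover have "\<And>l. VC \<notin> vars_of (x l - phi d y l)"
    using VC_free[OF freeMod_diff[OF x phi_freeMod[OF Qy(1)]]] by simp
  ultimately have e: "l \<le> d \<Longrightarrow> x l - phi d y l = 0" for l
    using conv_unique[of "\<lambda>l. x l - phi d y l"] by blast
  have "x = phi d y"
  proof
    fix l show "x l = phi d y l"
    proof (cases "l \<le> d")
      case True then show ?thesis using e by simp
    next
      case False then show ?thesis using x phi_freeMod[OF Qy(1)] unfolding freeMod_iff by simp
    qed
  qed
  then show ?thesis using Qy(1) by blast
qed

lemma phi_inj:
  fixes y1 y2 :: "nat \<Rightarrow> 'k::comm_ring_1 mpoly"
  assumes y1: "y1 \<in> freeMod d" and y2: "y2 \<in> freeMod d" and eq: "phi d y1 = phi d y2"
  shows "y1 = y2"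
proof -
  obtain W1 :: "'k mpoly" where W1: "conv d (phi d y1) = Gh d * conv d y1 - W1 * Fh d"
    using conv_phi by blast
  obtain W2 :: "'k mpoly" where W2: "conv d (phi d y2) = Gh d * conv d y2 - W2 * Fh d"
    using conv_phi by blast
  define D where "D = conv d (\<lambda>l. y1 l - y2 l)"
  have GD: "Gh d * D = (W1 - W2) * Fh d"
    using W1 W2 eq unfolding D_def conv_diff by (simp add: algebra_simps)
  have "subst (rh d) (Gh d * D) = Gh d * subst (rh d) D"
    by (simp add: hom_mult[OF hom_subst] r_G)
  moreover have "subst (rh d) (Gh d * D) = 0"
    unfolding GD by (simp add: hom_mult[OF hom_subst] r_F)
  ultimately have z: "subst (rh d) D = 0" using Gh_nzd by metis
  obtain u v :: "'k mpoly" where uv: "subst (eta2 d) (subst (rh d) D) - D = u * Fh d + v * 0"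
    using rh_ideal[OF vars_conv[OF freeMod_diff[OF y1 y2]]] unfolding inI_def D_def by blast
  have h0: "- D = u * Fh d" using uv z by (simp add: hom_zero[OF hom_subst])
  have "D = - (u * Fh d)" using arg_cong[OF h0, of uminus] by simp
  then have "conv d (\<lambda>l. y1 l - y2 l) = (- u) * Fh d"
    unfolding D_def by simp
  moreover have "\<And>l. VC \<notin> vars_of (y1 l - y2 l)"
    using VC_free[OF freeMod_diff[OF y1 y2]] by simp
  ultimately have e: "l \<le> d \<Longrightarrow> y1 l - y2 l = 0" for l
    using conv_unique[of "\<lambda>l. y1 l - y2 l"] by blast
  show ?thesis
  proof
    fix l show "y1 l = y2 l"
    proof (cases "l \<le> d")
      case True then show ?thesis using e by simp
    next
      case False then show ?thesis using y1 y2 unfolding freeMod_iff by simp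
    qed
  qed
qed

lemma psi_surj:
  fixes b :: "'k::comm_ring_1 mpoly"
  assumes b: "b \<in> polyB d"
  shows "\<exists>x\<in>freeMod d. psi d x = b"
proof -
  have bv: "vars_of b \<subseteq> AV d \<union> {VC}" using b by (simp add: polyB_iff)
  have "vars_of (subst (eta d) b :: 'k mpoly) \<subseteq> Vc d"
  proof (rule vars_subst[OF bv])
    fix v assume "v \<in> AV d \<union> {VC}"
    have "vars_of (cX :: 'k mpoly) \<subseteq> Vc d" by (rule vars_sub_X) (simp add: Vc_def)
    then show "vars_of (eta d v :: 'k mpoly) \<subseteq> Vc d"
      by (cases v) (simp_all add: vars_Ea vars_Eb)
  qed
  then obtain Q and z :: "nat \<Rightarrow> 'k mpoly" where z: "z \<in> freeMod d" "subst (eta d) b = Q * Fh d + conv d z"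
    using division by blast
  have "psi d z = subst (gam d) (subst (eta d) b - Q * Fh d)"
    unfolding psi_g[OF z(1)] z(2) by simp
  also have "\<dots> = b"
    by (simp add: hom_diff[OF hom_subst] hom_mult[OF hom_subst] g_F gh_id[OF bv])
  finally show ?thesis using z(1) by blast
qed


theorem mainTheorem1:
  fixes d :: nat
  shows "\<exists>(\<phi> :: (nat \<Rightarrow> 'k::field mpoly) \<Rightarrow> (nat \<Rightarrow> 'k mpoly)) (\<psi> :: (nat \<Rightarrow> 'k mpoly) \<Rightarrow> 'k mpoly).
    \<phi> ` freeMod d \<subseteq> freeMod d \<and>
    (\<forall>x\<in>freeMod d. \<forall>y\<in>freeMod d. \<phi> (madd x y) = madd (\<phi> x) (\<phi> y)) \<and>
    (\<forall>a\<in>polyA (d + 1). \<forall>x\<in>freeMod d. \<phi> (smul a x) = smul a (\<phi> x)) \<and>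
    (\<forall>x\<in>freeMod d. \<forall>ij. homogM d (shiftSub d) ij x \<longrightarrow> homogM d shiftMid ij (\<phi> x)) \<and>
    \<psi> ` freeMod d \<subseteq> polyB d \<and>
    (\<forall>x\<in>freeMod d. \<forall>y\<in>freeMod d. \<psi> (madd x y) = \<psi> x + \<psi> y) \<and>
    (\<forall>a\<in>polyA (d + 1). \<forall>x\<in>freeMod d. \<psi> (smul a x) = fmap d a * \<psi> x) \<and>
    (\<forall>x\<in>freeMod d. \<forall>ij. homogM d shiftMid ij x \<longrightarrow> homog (wB d) ij (\<psi> x)) \<and>
    inj_on \<phi> (freeMod d) \<and>
    \<phi> ` freeMod d = {x \<in> freeMod d. \<psi> x = 0} \<and>
    \<psi> ` freeMod d = polyB d"
proof -
  have c1: "phi d ` freeMod d \<subseteq> (freeMod d :: (nat \<Rightarrow> 'k mpoly) set)"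
    using phi_freeMod by blast
  have c4: "\<forall>x\<in>freeMod d. \<forall>ij. homogM d (shiftSub d) ij x \<longrightarrow> homogM d shiftMid ij (phi d (x :: nat \<Rightarrow> 'k mpoly))"
    using phi_homog by blast
  have c5: "psi d ` freeMod d \<subseteq> (polyB d :: 'k mpoly set)"
    using psi_in by blast
  have c8: "\<forall>x\<in>freeMod d. \<forall>ij. homogM d shiftMid ij x \<longrightarrow> homog (wB d) ij (psi d (x :: nat \<Rightarrow> 'k mpoly))"
    using psi_homog by blast
  have c9: "inj_on (phi d) (freeMod d :: (nat \<Rightarrow> 'k mpoly) set)"
    by (rule inj_onI) (rule phi_inj)
  have c10: "phi d ` freeMod d = {x \<in> freeMod d. psi d (x :: nat \<Rightarrow> 'k mpoly) = 0}"
  proof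
    show "phi d ` freeMod d \<subseteq> {x \<in> freeMod d. psi d (x :: nat \<Rightarrow> 'k mpoly) = 0}"
      using phi_freeMod psi_phi by blast
    show "{x \<in> freeMod d. psi d (x :: nat \<Rightarrow> 'k mpoly) = 0} \<subseteq> phi d ` freeMod d"
      using ker_sub by blast
  qed
  have c11: "psi d ` freeMod d = (polyB d :: 'k mpoly set)"
  proof
    show "psi d ` freeMod d \<subseteq> (polyB d :: 'k mpoly set)" by (rule c5)
    show "(polyB d :: 'k mpoly set) \<subseteq> psi d ` freeMod d"
      using psi_surj by blast
  qed
  show ?thesis
    apply (rule exI[of _ "phi d"])
    apply (rule exI[of _ "psi d"])
    using c1 c4 c5 c8 c9 c10 c11
    by (simp add: phi_add phi_smul psi_add psi_smul)
qed

end
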